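(* In the setting described in the context, for every $\bm{x}\in\mathcal{X}_t(\{\bm{x}_0\})$ there exists $(\bm{\sigma},\lambda)\in\mathcal{W}_t\times[0,1]$ such that $$\bm{x}=\bm{\pi}(\bm{\sigma},\lambda):=\lambda\,\bm{x}^{\rm upper}(\bm{\sigma})+(1-\lambda)\,\bm{x}^{\rm lower}(\bm{\sigma});$$ i.e., the map $\bm{\pi}:\mathcal{W}_t\times[0,1]\to\mathcal{X}_t(\{\bm{x}_0\})$ is surjective.
   Context: Let $\bm{A}\in\mathbb{R}^{n\times n}$, $\bm{b}\in\mathbb{R}^n$ with $(\bm{A},\bm{b})$ controllable and $\bm{A}$ having $n$ distinct eigenvalues; let $v_{\min}\le v_{\max}$ be constants, $\bm{z}_0\in\mathbb{R}^n$, $t>0$, and $\bm{x}_0:=\bm{M}\bm{z}_0$. Here $\bm{C}=(\bm{b},\bm{A}\bm{b},\dots,\bm{A}^{n-1}\bm{b})$, $\bm{q}^\top$ is the last row of $\bm{C}^{-1}$, $\bm{M}$ has rows $\bm{q}^\top,\bm{q}^\top\bm{A},\dots,\bm{q}^\top\bm{A}^{n-1}$; $\bm{c}=(c_0,\dots,c_{n-1})^\top$ are the coefficients of the characteristic polynomial $\lambda^n+c_{n-1}\lambda^{n-1}+\dots+c_0$ of $\bm{A}$; $\bm{A}_{\rm con}=\bm{M}\bm{A}\bm{M}^{-1}$ is the companion matrix with first $n-1$ rows $(\bm{0}\ \bm{I}_{n-1})$ and last row $-\bm{c}^\top$; $\bm{b}_{\rm con}=(0,\dots,0,1)^\top$;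 $\bm{A}_{\rm int}$ has first $n-1$ rows $(\bm{0}\ \bm{I}_{n-1})$ and last row zero. For $0\le s\le t$, with $f(\tau)=\langle\bm{c},e^{(s-\tau)\bm{A}_{\rm con}}\bm{b}_{\rm con}\rangle$ and $I(v)=v(s)-\int_0^s f(\tau)v(\tau)\,{\rm d}\tau$, let $I_{\min}(s),I_{\max}(s)$ be the inf and sup of $I(v)$ over $v\in C([0,s])$ with $v_{\min}\le v\le v_{\max}$, and $u_{\min}(s)=-\langle\bm{c},e^{s\bm{A}_{\rm con}}\bm{M}\bm{z}_0\rangle+I_{\min}(s)$, $u_{\max}(s)=-\langle\bm{c},e^{s\bm{A}_{\rm con}}\bm{M}\bm{z}_0\rangle+I_{\max}(s)$. The integrator reach set $\mathcal{X}_t(\{\bm{x}_0\})$ is the set of $\bm{x}(t)$ with $\dot{\bm{x}}=\bm{A}_{\rm int}\bm{x}+\bm{b}_{\rm con}u$, $\bm{x}(0)=\bm{x}_0$, $u\in C([0,t])$, $u_{\min}(s)\le u(s)\le u_{\max}(s)$ for all $s$. Define $\mu=(u_{\max}-u_{\min})/2$, $\nu=(u_{\max}+u_{\min})/2$, $\bm{\xi}(s)=\big(\tfrac{s^{n-1}}{(n-1)!},\dots,s,1\big)^\top$, $\chi_k(t,\bm{x}_0)=\sum_{\ell=k}^{n}\frac{t^{\ell-k}}{(\ell-k)!}x_{\ell0}$, $\mathcal{W}_t:=\{\bm{\sigma}\in\mathbb{R}^{n-1}\mid 0\le\sigma_1\le\dots\le\sigma_{n-1}\le t\}$, and, with $\sigma_0:=0,\sigma_n:=t$,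 $\bm{x}^{\rm upper/lower}(\bm{\sigma})=\bm{\chi}(t,\bm{x}_0)+\int_0^t\nu(s)\bm{\xi}(t-s)\,{\rm d}s\pm\sum_{i=1}^{n}(-1)^{i-1}\int_{\sigma_{i-1}}^{\sigma_i}\mu(s)\bm{\xi}(t-s)\,{\rm d}s$ (plus sign for upper, minus for lower); these are the points of the two bounding surfaces of $\mathcal{X}_t(\{\bm{x}_0\})$. *)

theory Defs
  imports "HOL-Analysis.Analysis" "Jordan_Normal_Form.Char_Poly"
begin

(* Indices are 0-based: paper index k (1 \<le> k \<le> n) corresponds to Isabelle index k - 1. *)

definition ctrb_mat :: "nat \<Rightarrow> real mat \<Rightarrow> real vec \<Rightarrow> real mat" where
  "ctrb_mat n A b = mat n n (\<lambda>(i,j). ((A ^\<^sub>m j) *\<^sub>v b) $ i)"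

(* Kalman rank condition: C has full rank n, i.e. (C square) C invertible *)
definition controllable :: "nat \<Rightarrow> real mat \<Rightarrow> real vec \<Rightarrow> bool" where
  "controllable n A b \<longleftrightarrow> invertible_mat (ctrb_mat n A b)"

definition mat_inv :: "real mat \<Rightarrow> real mat" where
  "mat_inv C = (SOME B. inverts_mat C B \<and> inverts_mat B C)"

definition distinct_eigenvalues :: "nat \<Rightarrow> real mat \<Rightarrow> bool" where
  "distinct_eigenvalues n A \<longleftrightarrow>
     card {k :: complex. eigenvalue (map_mat complex_of_real A) k} = n"

definition qvec :: "nat \<Rightarrow> real mat \<Rightarrow> real vec \<Rightarrow> real vec" where
  "qvec n A b = row (mat_inv (ctrb_mat n A b)) (n - 1)"

definition Mmat :: "nat \<Rightarrow> real mat \<Rightarrow> real vec \<Rightarrow> real mat" where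
  "Mmat n A b = mat n n (\<lambda>(i,j). row (mat_of_rows n [qvec n A b] * (A ^\<^sub>m i)) 0 $ j)"

definition cvec :: "nat \<Rightarrow> real mat \<Rightarrow> real vec" where
  "cvec n A = vec n (\<lambda>k. coeff (char_poly A) k)"

definition Acon :: "nat \<Rightarrow> real mat \<Rightarrow> real mat" where
  "Acon n A = mat n n (\<lambda>(i,j). if i < n - 1 then (if j = i + 1 then 1 else 0)
                                 else - (cvec n A $ j))"

definition bcon :: "nat \<Rightarrow> real vec" where
  "bcon n = unit_vec n (n - 1)"

definition Aint :: "nat \<Rightarrow> real mat" where
  "Aint n = mat n n (\<lambda>(i,j). if i < n - 1 \<and> j = i + 1 then 1 else 0)"

definition mat_exp :: "nat \<Rightarrow> real \<Rightarrow> real mat \<Rightarrow> real mat" where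
  "mat_exp n s B = mat n n (\<lambda>(i,j). \<Sum>k. (s ^ k / fact k) * ((B ^\<^sub>m k) $$ (i,j)))"

definition fker :: "nat \<Rightarrow> real mat \<Rightarrow> real \<Rightarrow> real \<Rightarrow> real" where
  "fker n A s \<tau> = cvec n A \<bullet> (mat_exp n (s - \<tau>) (Acon n A) *\<^sub>v bcon n)"

definition Ifun :: "nat \<Rightarrow> real mat \<Rightarrow> real \<Rightarrow> (real \<Rightarrow> real) \<Rightarrow> real" where
  "Ifun n A s v = v s - integral {0..s} (\<lambda>\<tau>. fker n A s \<tau> * v \<tau>)"

definition admissible_v :: "real \<Rightarrow> real \<Rightarrow> real \<Rightarrow> (real \<Rightarrow> real) \<Rightarrow> bool" where
  "admissible_v vmin vmax s v \<longleftrightarrow>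
     continuous_on {0..s} v \<and> (\<forall>\<tau>\<in>{0..s}. vmin \<le> v \<tau> \<and> v \<tau> \<le> vmax)"

definition Imin :: "nat \<Rightarrow> real mat \<Rightarrow> real \<Rightarrow> real \<Rightarrow> real \<Rightarrow> real" where
  "Imin n A vmin vmax s = Inf {Ifun n A s v | v. admissible_v vmin vmax s v}"

definition Imax :: "nat \<Rightarrow> real mat \<Rightarrow> real \<Rightarrow> real \<Rightarrow> real \<Rightarrow> real" where
  "Imax n A vmin vmax s = Sup {Ifun n A s v | v. admissible_v vmin vmax s v}"

definition umin :: "nat \<Rightarrow> real mat \<Rightarrow> real vec \<Rightarrow> real \<Rightarrow> real \<Rightarrow> real vec \<Rightarrow> real \<Rightarrow> real" where
  "umin n A b vmin vmax z0 s =
     - (cvec n A \<bullet> (mat_exp n s (Acon n A) *\<^sub>v (Mmat n A b *\<^sub>v z0))) + Imin n A vmin vmax s"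

definition umax :: "nat \<Rightarrow> real mat \<Rightarrow> real vec \<Rightarrow> real \<Rightarrow> real \<Rightarrow> real vec \<Rightarrow> real \<Rightarrow> real" where
  "umax n A b vmin vmax z0 s =
     - (cvec n A \<bullet> (mat_exp n s (Acon n A) *\<^sub>v (Mmat n A b *\<^sub>v z0))) + Imax n A vmin vmax s"

definition reach_int :: "nat \<Rightarrow> (real \<Rightarrow> real) \<Rightarrow> (real \<Rightarrow> real) \<Rightarrow> real \<Rightarrow> real vec \<Rightarrow> real vec set" where
  "reach_int n ul uh t x0 = {x t | x u.
      continuous_on {0..t} u \<and> (\<forall>s\<in>{0..t}. ul s \<le> u s \<and> u s \<le> uh s) \<and>
      (\<forall>s. dim_vec (x s) = n) \<and> x 0 = x0 \<and>
      (\<forall>s\<in>{0..t}. \<forall>i<n.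
         ((\<lambda>r. x r $ i) has_real_derivative ((Aint n *\<^sub>v x s + u s \<cdot>\<^sub>v bcon n) $ i))
           (at s within {0..t}))}"

definition xi :: "nat \<Rightarrow> real \<Rightarrow> real vec" where
  "xi n s = vec n (\<lambda>i. s ^ (n - 1 - i) / fact (n - 1 - i))"

definition chi :: "nat \<Rightarrow> real \<Rightarrow> real vec \<Rightarrow> real vec" where
  "chi n t x0 = vec n (\<lambda>k. \<Sum>l=k..n-1. t ^ (l - k) / fact (l - k) * x0 $ l)"

definition sig_ext :: "nat \<Rightarrow> real \<Rightarrow> real vec \<Rightarrow> nat \<Rightarrow> real" where
  "sig_ext n t \<sigma> i = (if i = 0 then 0 else if i = n then t else \<sigma> $ (i - 1))"

definition Wset :: "nat \<Rightarrow> real \<Rightarrow> real vec set" where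
  "Wset n t = {\<sigma>. dim_vec \<sigma> = n - 1 \<and> (\<forall>i<n. sig_ext n t \<sigma> i \<le> sig_ext n t \<sigma> (i + 1))}"

definition x_bound :: "nat \<Rightarrow> real \<Rightarrow> (real \<Rightarrow> real) \<Rightarrow> (real \<Rightarrow> real) \<Rightarrow> real \<Rightarrow> real vec
                        \<Rightarrow> real vec \<Rightarrow> real vec" where
  "x_bound n sg ul uh t x0 \<sigma> = vec n (\<lambda>k.
      chi n t x0 $ k
      + integral {0..t} (\<lambda>s. (uh s + ul s) / 2 * xi n (t - s) $ k)
      + sg * (\<Sum>i=1..n. (-1) ^ (i - 1) *
           integral {sig_ext n t \<sigma> (i - 1)..sig_ext n t \<sigma> i}
             (\<lambda>s. (uh s - ul s) / 2 * xi n (t - s) $ k)))"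

definition x_upper where "x_upper n ul uh t x0 \<sigma> = x_bound n 1 ul uh t x0 \<sigma>"
definition x_lower where "x_lower n ul uh t x0 \<sigma> = x_bound n (-1) ul uh t x0 \<sigma>"

end

theory Submission
  imports Defs
begin

definition Pk :: "nat \<Rightarrow> real \<Rightarrow> nat \<Rightarrow> real \<Rightarrow> real" where
  "Pk n t k s = (t - s) ^ (n - 1 - k) / fact (n - 1 - k)"

definition aeta :: "nat \<Rightarrow> real \<Rightarrow> (nat \<Rightarrow> real) \<Rightarrow> real \<Rightarrow> real" where
  "aeta n t \<eta> s = (\<Sum>k<n. \<eta> k * Pk n t k s)"

lemma aeta_poly_roots:
  assumes "\<exists>k<n. \<eta> k \<noteq> 0"
  shows "finite {s. aeta n t \<eta> s = 0} \<and> card {s. aeta n t \<eta> s = 0} \<le> n - 1"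
proof -
  define p :: "real poly" where "p = (\<Sum>j<n. monom (\<eta> (n - 1 - j) / fact j) j)"
  have coeffp: "coeff p i = (if i < n then \<eta> (n - 1 - i) / fact i else 0)" for i
    unfolding p_def coeff_sum coeff_monom by (auto simp: sum.delta)
  have polyp: "poly p r = (\<Sum>j<n. \<eta> (n - 1 - j) / fact j * r ^ j)" for r
    unfolding p_def poly_sum poly_monom by simp
  have a_eq: "aeta n t \<eta> s = poly p (t - s)" for s
  proof -
    have "aeta n t \<eta> s = (\<Sum>k<n. \<eta> k * ((t - s) ^ (n - 1 - k) / fact (n - 1 - k)))"
      by (simp add: aeta_def Pk_def)
    also have "\<dots> = (\<Sum>j<n. \<eta> (n - Suc j) * ((t - s) ^ (n - 1 - (n - Suc j)) / fact (n - 1 - (n - Suc j))))"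
      by (rule sum.nat_diff_reindex[symmetric])
    also have "\<dots> = (\<Sum>j<n. \<eta> (n - 1 - j) / fact j * (t - s) ^ j)"
      by (intro sum.cong refl) (auto simp: Suc_diff_Suc)
    finally show ?thesis by (simp add: polyp)
  qed
  have pnz: "p \<noteq> 0"
  proof
    assume "p = 0"
    from assms obtain k where k: "k < n" "\<eta> k \<noteq> 0" by blast
    have "coeff p (n - 1 - k) = 0" using \<open>p = 0\<close> by simp
    then show False using k coeffp[of "n - 1 - k"] by (auto simp: Suc_diff_Suc)
  qed
  have degp: "degree p \<le> n - 1"
    by (rule degree_le) (auto simp: coeffp)
  have eq: "{s. aeta n t \<eta> s = 0} = (\<lambda>r. t - r) ` {r. poly p r = 0}"
    by (auto simp: a_eq image_iff intro!: exI[where x="t - _"])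
  have fin: "finite {r. poly p r = 0}" using pnz by (rule poly_roots_finite)
  show ?thesis
  proof
    show "finite {s. aeta n t \<eta> s = 0}" unfolding eq using fin by simp
    have "card {s. aeta n t \<eta> s = 0} \<le> card {r. poly p r = 0}"
      unfolding eq by (rule card_image_le[OF fin])
    also have "\<dots> \<le> degree p" using pnz by (rule card_poly_roots_bound)
    finally show "card {s. aeta n t \<eta> s = 0} \<le> n - 1" using degp by simp
  qed
qed

lemma box_subseq:
  fixes f :: "nat \<Rightarrow> nat \<Rightarrow> real"
  assumes "\<And>j k. k < m \<Longrightarrow> \<bar>f j k\<bar> \<le> B"
  shows "\<exists>r l. strict_mono r \<and> (\<forall>k<m. (\<lambda>j. f (r j) k) \<longlonglongrightarrow> l k)"
  using assms
proof (induction m)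
  case 0
  show ?case by (rule exI[of _ id]) (auto simp: strict_mono_def)
next
  case (Suc m)
  then obtain r1 l1 where r1: "strict_mono r1" "\<forall>k<m. (\<lambda>j. f (r1 j) k) \<longlonglongrightarrow> l1 k"
    by (metis less_SucI)
  have "\<forall>j. f (r1 j) m \<in> {-B..B}"
  proof
    fix j have "\<bar>f (r1 j) m\<bar> \<le> B" using Suc.prems by simp
    then show "f (r1 j) m \<in> {-B..B}" by (simp add: abs_le_iff)
  qed
  then obtain l' r2 where r2: "strict_mono r2" "((\<lambda>j. f (r1 j) m) \<circ> r2) \<longlonglongrightarrow> l'"
    using seq_compactE[OF compact_imp_seq_compact[OF compact_Icc]] by metis
  show ?case
  proof (intro exI conjI allI impI)
    show "strict_mono (r1 \<circ> r2)" using r1(1) r2(1) by (rule strict_mono_o)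
    fix k assume "k < Suc m"
    show "(\<lambda>j. f ((r1 \<circ> r2) j) k) \<longlonglongrightarrow> (l1(m := l')) k"
    proof (cases "k = m")
      case True then show ?thesis using r2(2) by (simp add: o_def)
    next
      case False
      then have "k < m" using \<open>k < Suc m\<close> by simp
      then have "(\<lambda>j. f (r1 j) k) \<longlonglongrightarrow> l1 k" using r1(2) by blast
      from LIMSEQ_subseq_LIMSEQ[OF this r2(1)] show ?thesis using False by (simp add: o_def)
    qed
  qed
qed


lemma const_sign:
  fixes f :: "real \<Rightarrow> real"
  assumes "x \<le> y" "continuous_on {x..y} f" "\<And>s. x < s \<Longrightarrow> s < y \<Longrightarrow> f s \<noteq> 0"
  shows "\<exists>e\<in>{-1,1::real}. \<forall>s\<in>{x..y}. 0 \<le> e * f s"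
proof (cases "\<exists>s\<in>{x..y}. f s > 0")
  case True
  then obtain s where s: "s \<in> {x..y}" "f s > 0" by blast
  have "\<forall>s'\<in>{x..y}. 0 \<le> f s'"
  proof (rule ccontr)
    assume "\<not> (\<forall>s'\<in>{x..y}. 0 \<le> f s')"
    then obtain s' where s': "s' \<in> {x..y}" "f s' < 0" by force
    show False
    proof (cases "s \<le> s'")
      case True
      have "continuous_on {s..s'} f" using assms(2) s s' by (auto elim: continuous_on_subset)
      from IVT2'[of f s' 0 s, OF _ _ True this] s s' obtain r where r: "s \<le> r" "r \<le> s'" "f r = 0" by auto
      then have "s < r" "r < s'" using s s' by (auto simp: order.order_iff_strict)
      then show False using assms(3)[of r] r s s' by auto
    next
      case False
      then have le: "s' \<le> s" by simp
      have "continuous_on {s'..s} f" using assms(2) s s' by (auto elim: continuous_on_subset)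
      from IVT'[of f s' 0 s, OF _ _ le this] s s' obtain r where r: "s' \<le> r" "r \<le> s" "f r = 0" by auto
      then have "s' < r" "r < s" using s s' by (auto simp: order.order_iff_strict)
      then show False using assms(3)[of r] r s s' by auto
    qed
  qed
  then show ?thesis by (intro bexI[of _ 1]) auto
next
  case False
  then show ?thesis by (intro bexI[of _ "-1"]) (auto simp: not_less)
qed

definition extL :: "real \<Rightarrow> real \<Rightarrow> real list \<Rightarrow> nat \<Rightarrow> real" where
  "extL \<alpha> \<beta> L i = (if i = 0 then \<alpha> else if i \<le> length L then L ! (i - 1) else \<beta>)"

lemma SC_aux:
  fixes f :: "real \<Rightarrow> real"
  assumes "finite Z"
  shows "card (Z \<inter> {\<alpha><..<\<beta>}) = m \<Longrightarrow> \<alpha> \<le> \<beta> \<Longrightarrow> continuous_on {\<alpha>..\<beta>} f \<Longrightarrow>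
     (\<forall>s\<in>{\<alpha>..\<beta>}. f s = 0 \<longrightarrow> s \<in> Z) \<Longrightarrow>
     \<exists>L c. sorted L \<and> set L \<subseteq> {\<alpha>..\<beta>} \<and> length L \<le> card (Z \<inter> {\<alpha><..<\<beta>}) \<and> c \<in> {-1,1} \<and>
       (\<forall>i \<le> length L. \<forall>s\<in>{extL \<alpha> \<beta> L i..extL \<alpha> \<beta> L (Suc i)}. 0 \<le> c * (-1) ^ i * f s)"
proof (induction m arbitrary: \<beta> rule: less_induct)
  case (less m)
  show ?case
  proof (cases "Z \<inter> {\<alpha><..<\<beta>} = {}")
    case True
    have "\<exists>e\<in>{-1,1::real}. \<forall>s\<in>{\<alpha>..\<beta>}. 0 \<le> e * f s"
    proof (rule const_sign[OF less.prems(2,3)])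
      fix s assume s: "\<alpha> < s" "s < \<beta>"
      show "f s \<noteq> 0"
      proof
        assume "f s = 0"
        then have "s \<in> Z" using less.prems(4) s by auto
        then show False using True s by auto
      qed
    qed
    then obtain e where e: "e \<in> {-1,1}" "\<forall>s\<in>{\<alpha>..\<beta>}. 0 \<le> e * f s" by blast
    show ?thesis
      by (rule exI[of _ "[]"], rule exI[of _ e]) (use e in \<open>auto simp: extL_def\<close>)
  next
    case False
    define z where "z = Max (Z \<inter> {\<alpha><..<\<beta>})"
    have finZ: "finite (Z \<inter> {\<alpha><..<\<beta>})" using assms by simp
    have zin: "z \<in> Z \<inter> {\<alpha><..<\<beta>}" unfolding z_def using Max_in[OF finZ False] .
    have zmax: "\<And>s. s \<in> Z \<inter> {\<alpha><..<\<beta>} \<Longrightarrow> s \<le> z" unfolding z_def using Max_ge[OF finZ] by blast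
    have ins: "Z \<inter> {\<alpha><..<\<beta>} = insert z (Z \<inter> {\<alpha><..<z})"
      using zin zmax by (auto simp: order.order_iff_strict) (meson IntI greaterThanLessThan_iff)
    have znot: "z \<notin> Z \<inter> {\<alpha><..<z}" by simp
    have cardeq: "card (Z \<inter> {\<alpha><..<\<beta>}) = Suc (card (Z \<inter> {\<alpha><..<z}))"
      using ins znot assms by (metis card_insert_disjoint finite_Int)
    have "\<exists>L c. sorted L \<and> set L \<subseteq> {\<alpha>..z} \<and> length L \<le> card (Z \<inter> {\<alpha><..<z}) \<and> c \<in> {-1,1} \<and>
       (\<forall>i \<le> length L. \<forall>s\<in>{extL \<alpha> z L i..extL \<alpha> z L (Suc i)}. 0 \<le> c * (-1) ^ i * f s)"
    proof (rule less.IH[OF _ refl])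
      show "card (Z \<inter> {\<alpha><..<z}) < m" using cardeq less.prems(1) by simp
      show "\<alpha> \<le> z" using zin by simp
      show "continuous_on {\<alpha>..z} f" using less.prems(3) zin by (auto elim: continuous_on_subset)
      show "\<forall>s\<in>{\<alpha>..z}. f s = 0 \<longrightarrow> s \<in> Z" using less.prems(4) zin by auto
    qed
    then obtain L c where L: "sorted L" "set L \<subseteq> {\<alpha>..z}" "length L \<le> card (Z \<inter> {\<alpha><..<z})" "c \<in> {-1,1}"
      "\<And>i s. i \<le> length L \<Longrightarrow> s\<in>{extL \<alpha> z L i..extL \<alpha> z L (Suc i)} \<Longrightarrow> 0 \<le> c * (-1) ^ i * f s"
      by blast
    have "\<exists>e\<in>{-1,1::real}. \<forall>s\<in>{z..\<beta>}. 0 \<le> e * f s"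
    proof (rule const_sign)
      show "z \<le> \<beta>" using zin by simp
      show "continuous_on {z..\<beta>} f" using less.prems(3) zin by (auto elim: continuous_on_subset)
      fix s assume "z < s" "s < \<beta>"
      then show "f s \<noteq> 0" using less.prems(4) zin zmax[of s] by fastforce
    qed
    then obtain e where e: "e \<in> {-1,1}" "\<And>s. s\<in>{z..\<beta>} \<Longrightarrow> 0 \<le> e * f s" by blast
    have ext_eq: "extL \<alpha> \<beta> L i = extL \<alpha> z L i" if "i \<le> length L" for i
      using that by (simp add: extL_def)
    have ext_last: "extL \<alpha> z L (Suc (length L)) = z" by (simp add: extL_def)
    have ext_lastb: "extL \<alpha> \<beta> L (Suc (length L)) = \<beta>" by (simp add: extL_def)
    have sgn: "(-1::real) ^ i \<in> {-1, 1}" for i by (cases "even i") auto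
    show ?thesis
    proof (cases "e = c * (-1) ^ length L")
      case True
      show ?thesis
      proof (intro exI conjI allI impI ballI)
        show "sorted L" by fact
        show "set L \<subseteq> {\<alpha>..\<beta>}" using L(2) zin by auto
        show "length L \<le> card (Z \<inter> {\<alpha><..<\<beta>})" using L(3) cardeq by simp
        show "c \<in> {-1,1}" by fact
        fix i s assume i: "i \<le> length L" and s: "s \<in> {extL \<alpha> \<beta> L i..extL \<alpha> \<beta> L (Suc i)}"
        show "0 \<le> c * (-1) ^ i * f s"
        proof (cases "i < length L")
          case True
          then show ?thesis using L(5)[of i s] s ext_eq[of i] ext_eq[of "Suc i"] by simp
        next
          case False
          then have il: "i = length L" using i by simp
          show ?thesis
          proof (cases "s \<le> z")
            case True
            then show ?thesis using L(5)[of i s] s il ext_eq[of i] ext_last by simp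
          next
            case False
            then show ?thesis using e(2)[of s] s il ext_lastb \<open>e = c * (-1) ^ length L\<close> by simp
          qed
        qed
      qed
    next
      case False
      have eneg: "e = - (c * (-1) ^ length L)"
        using False e(1) L(4) sgn[of "length L"] by auto
      show ?thesis
      proof (intro exI conjI allI impI ballI)
        show "sorted (L @ [z])" using L(1,2) by (auto simp: sorted_append)
        show "set (L @ [z]) \<subseteq> {\<alpha>..\<beta>}" using L(2) zin by auto
        show "length (L @ [z]) \<le> card (Z \<inter> {\<alpha><..<\<beta>})" using L(3) cardeq by simp
        show "c \<in> {-1,1}" by fact
        fix i s assume i: "i \<le> length (L @ [z])" and s: "s \<in> {extL \<alpha> \<beta> (L @ [z]) i..extL \<alpha> \<beta> (L @ [z]) (Suc i)}"
        have e2: "extL \<alpha> \<beta> (L @ [z]) j = extL \<alpha> z L j" if "j \<le> Suc (length L)" for j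
          using that by (auto simp: extL_def nth_append)
        show "0 \<le> c * (-1) ^ i * f s"
        proof (cases "i \<le> length L")
          case True
          then show ?thesis using L(5)[of i s] s e2[of i] e2[of "Suc i"] by simp
        next
          case False
          then have il: "i = Suc (length L)" using i by simp
          have "s \<in> {z..\<beta>}" using s il e2[of i] ext_last by (simp add: extL_def)
          then show ?thesis using e(2)[of s] il eneg by simp
        qed
      qed
    qed
  qed
qed

lemma sum_intervals:
  fixes F :: "real \<Rightarrow> real"
  assumes "\<And>i. i < m \<Longrightarrow> S i \<le> S (Suc i)" "continuous_on UNIV F"
  shows "(\<Sum>i<m. integral {S i..S (Suc i)} F) = integral {S 0..S m} F \<and> S 0 \<le> S m"
  using assms(1)
proof (induction m)
  case 0 then show ?case by simp
next
  case (Suc m)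
  then have IH: "(\<Sum>i<m. integral {S i..S (Suc i)} F) = integral {S 0..S m} F" "S 0 \<le> S m" by auto
  have le: "S m \<le> S (Suc m)" using Suc.prems by simp
  have int: "F integrable_on {S 0..S (Suc m)}"
    by (rule integrable_continuous_interval) (use assms(2) continuous_on_subset in blast)
  have "integral {S 0..S m} F + integral {S m..S (Suc m)} F = integral {S 0..S (Suc m)} F"
    by (rule Henstock_Kurzweil_Integration.integral_combine[OF IH(2) le int])
  then show ?case using IH le by simp
qed


lemma cont_Pk: "continuous_on S (Pk n t k)"
  unfolding Pk_def[abs_def] by (intro continuous_intros) simp

lemma cont_aeta: "continuous_on S (aeta n t \<eta>)"
  unfolding aeta_def[abs_def] by (intro continuous_intros cont_Pk)

lemma extL_mono:
  assumes "sorted L" "set L \<subseteq> {\<alpha>..\<beta>}" "\<alpha> \<le> \<beta>"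
  shows "extL \<alpha> \<beta> L i \<le> extL \<alpha> \<beta> L (Suc i)"
proof -
  have inL: "L ! j \<in> {\<alpha>..\<beta>}" if "j < length L" for j using assms(2) that nth_mem by blast
  show ?thesis
  proof (cases "i = 0")
    case True then show ?thesis using inL[of 0] assms(3) by (auto simp: extL_def Suc_le_eq)
  next
    case False
    show ?thesis
    proof (cases "Suc i \<le> length L")
      case True
      have "L ! (i - 1) \<le> L ! i" using assms(1) True by (intro sorted_nth_mono) auto
      then show ?thesis using True False by (auto simp: extL_def)
    next
      case False2: False
      then show ?thesis using inL[of "i - 1"] False by (auto simp: extL_def)
    qed
  qed
qed

lemma extL_range:
  assumes "set L \<subseteq> {\<alpha>..\<beta>}" "\<alpha> \<le> \<beta>"
  shows "extL \<alpha> \<beta> L i \<in> {\<alpha>..\<beta>}"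
proof -
  have "L ! (i - 1) \<in> {\<alpha>..\<beta>}" if "0 < i" "i \<le> length L"
  proof -
    have "i - 1 < length L" using that by simp
    then have "L ! (i - 1) \<in> set L" by (rule nth_mem)
    then show ?thesis using assms(1) by blast
  qed
  then show ?thesis using assms(2) unfolding extL_def by auto
qed

lemma pw_ineq:
  fixes x y e \<epsilon> K :: real
  assumes "e \<in> {-1,1}" "0 \<le> e * x" "\<epsilon> > 0" "\<epsilon> * K = 1"
  shows "\<bar>x + \<epsilon> * y\<bar> \<le> \<bar>x\<bar> + \<epsilon> * (e * y) + 2 * \<epsilon> * max 0 (\<bar>y\<bar> - K * \<bar>x\<bar>)"
proof -
  have "\<epsilon> * max 0 (\<bar>y\<bar> - K * \<bar>x\<bar>) = max 0 (\<epsilon> * \<bar>y\<bar> - \<epsilon> * K * \<bar>x\<bar>)"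
    using assms(3) by (simp add: max_def algebra_simps mult_le_cancel_left_pos)
  also have "\<dots> = max 0 (\<bar>\<epsilon> * y\<bar> - \<bar>x\<bar>)" using assms(3,4) by (simp add: abs_mult)
  finally have eq: "\<epsilon> * max 0 (\<bar>y\<bar> - K * \<bar>x\<bar>) = max 0 (\<bar>\<epsilon> * y\<bar> - \<bar>x\<bar>)" .
  define Y where "Y = \<epsilon> * y"
  have "\<bar>x + Y\<bar> \<le> \<bar>x\<bar> + e * Y + 2 * max 0 (\<bar>Y\<bar> - \<bar>x\<bar>)"
    using assms(1,2) by (auto simp: abs_if max_def)
  then show ?thesis using eq unfolding Y_def by (simp add: algebra_simps)
qed


definition pvec :: "nat \<Rightarrow> real \<Rightarrow> (real \<Rightarrow> real) \<Rightarrow> nat \<Rightarrow> real" where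
  "pvec n t w k = integral {0..t} (\<lambda>s. w s * Pk n t k s)"

definition dotp :: "nat \<Rightarrow> real \<Rightarrow> (real \<Rightarrow> real) \<Rightarrow> (nat \<Rightarrow> real) \<Rightarrow> real" where
  "dotp n t w \<eta> = (\<Sum>k<n. \<eta> k * pvec n t w k)"

definition Gf :: "nat \<Rightarrow> real \<Rightarrow> (real \<Rightarrow> real) \<Rightarrow> (nat \<Rightarrow> real) \<Rightarrow> real" where
  "Gf n t mu \<eta> = integral {0..t} (\<lambda>s. mu s * \<bar>aeta n t \<eta> s\<bar>)"

lemma intc: "continuous_on UNIV f \<Longrightarrow> (f :: real \<Rightarrow> real) integrable_on {x..y}"
  by (intro integrable_continuous_interval) (auto elim: continuous_on_subset)

lemma aeta_sc: "aeta n t (\<lambda>k. c * \<eta> k) s = c * aeta n t \<eta> s"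
  by (simp add: aeta_def sum_distrib_left mult_ac)

lemma aeta_lin: "aeta n t (\<lambda>k. \<eta> k + c * d k) s = aeta n t \<eta> s + c * aeta n t d s"
  by (simp add: aeta_def sum_distrib_left algebra_simps sum.distrib)

lemma aeta_unit: "k < n \<Longrightarrow> aeta n t (\<lambda>j. if j = k then 1 else 0) s = Pk n t k s"
proof -
  assume k: "k < n"
  have "aeta n t (\<lambda>j. if j = k then 1 else 0) s = (\<Sum>j<n. if j = k then Pk n t j s else 0)"
    unfolding aeta_def by (intro sum.cong) auto
  also have "\<dots> = Pk n t k s" using k by (simp add: sum.delta)
  finally show ?thesis .
qed

lemma aeta_zero: "(\<And>k. k < n \<Longrightarrow> \<eta> k = 0) \<Longrightarrow> aeta n t \<eta> s = 0"
  by (simp add: aeta_def)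

context
  fixes n :: nat and t :: real and mu w :: "real \<Rightarrow> real"
  assumes t: "t > 0" and cmu: "continuous_on UNIV mu" and cw: "continuous_on UNIV w"
    and wb: "\<And>s. s \<in> {0..t} \<Longrightarrow> \<bar>w s\<bar> \<le> mu s"
begin

lemma mu0: "s \<in> {0..t} \<Longrightarrow> 0 \<le> mu s"
  using wb[of s] by linarith

lemma dot_eq: "dotp n t w \<eta> = integral {0..t} (\<lambda>s. w s * aeta n t \<eta> s)"
proof -
  have "integral {0..t} (\<lambda>s. w s * aeta n t \<eta> s) = integral {0..t} (\<lambda>s. \<Sum>k<n. \<eta> k * (w s * Pk n t k s))"
    by (simp add: aeta_def sum_distrib_left mult_ac)
  also have "\<dots> = (\<Sum>k<n. integral {0..t} (\<lambda>s. \<eta> k * (w s * Pk n t k s)))"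
    by (rule integral_sum) (auto intro!: intc continuous_intros cw cont_Pk)
  also have "\<dots> = dotp n t w \<eta>" by (simp add: dotp_def pvec_def)
  finally show ?thesis by simp
qed

lemma dot_le: "dotp n t w \<eta> \<le> Gf n t mu \<eta>"
  unfolding dot_eq Gf_def
proof (rule integral_le)
  show "(\<lambda>s. w s * aeta n t \<eta> s) integrable_on {0..t}" by (intro intc continuous_intros cw cont_aeta)
  show "(\<lambda>s. mu s * \<bar>aeta n t \<eta> s\<bar>) integrable_on {0..t}" by (intro intc continuous_intros cmu cont_aeta)
  fix s assume s: "s \<in> {0..t}"
  have "w s * aeta n t \<eta> s \<le> \<bar>w s\<bar> * \<bar>aeta n t \<eta> s\<bar>" by (metis abs_ge_self abs_mult)
  also have "\<dots> \<le> mu s * \<bar>aeta n t \<eta> s\<bar>" using wb[OF s] by (intro mult_right_mono) auto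
  finally show "w s * aeta n t \<eta> s \<le> mu s * \<bar>aeta n t \<eta> s\<bar>" .
qed

lemma G_nonneg: "0 \<le> Gf n t mu \<eta>"
  unfolding Gf_def using mu0 by (intro integral_nonneg) (auto intro!: intc continuous_intros cmu cont_aeta)

lemma G_sc: "Gf n t mu (\<lambda>k. c * \<eta> k) = \<bar>c\<bar> * Gf n t mu \<eta>"
proof -
  have "(\<lambda>s. mu s * \<bar>aeta n t (\<lambda>k. c * \<eta> k) s\<bar>) = (\<lambda>s. \<bar>c\<bar> * (mu s * \<bar>aeta n t \<eta> s\<bar>))"
    by (simp add: aeta_sc abs_mult mult_ac)
  then show ?thesis unfolding Gf_def by simp
qed

lemma dot_sc: "dotp n t w (\<lambda>k. c * \<eta> k) = c * dotp n t w \<eta>"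
  by (simp add: dotp_def sum_distrib_left mult_ac)

definition Cc :: "nat \<Rightarrow> real" where
  "Cc k = integral {0..t} (\<lambda>s. mu s * \<bar>Pk n t k s\<bar>)"

lemma G_lip1: "Gf n t mu \<eta> \<le> Gf n t mu \<eta>' + (\<Sum>k<n. \<bar>\<eta> k - \<eta>' k\<bar> * Cc k)"
proof -
  have "Gf n t mu \<eta> \<le> integral {0..t} (\<lambda>s. mu s * \<bar>aeta n t \<eta>' s\<bar> + (\<Sum>k<n. \<bar>\<eta> k - \<eta>' k\<bar> * (mu s * \<bar>Pk n t k s\<bar>)))"
    unfolding Gf_def
  proof (rule integral_le)
    show "(\<lambda>s. mu s * \<bar>aeta n t \<eta> s\<bar>) integrable_on {0..t}" by (intro intc continuous_intros cmu cont_aeta)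
    show "(\<lambda>s. mu s * \<bar>aeta n t \<eta>' s\<bar> + (\<Sum>k<n. \<bar>\<eta> k - \<eta>' k\<bar> * (mu s * \<bar>Pk n t k s\<bar>))) integrable_on {0..t}"
      by (intro intc continuous_intros cmu cont_aeta cont_Pk)
    fix s assume s: "s \<in> {0..t}"
    have "aeta n t \<eta> s = aeta n t \<eta>' s + (\<Sum>k<n. (\<eta> k - \<eta>' k) * Pk n t k s)"
      by (simp add: aeta_def algebra_simps sum_subtractf)
    then have "\<bar>aeta n t \<eta> s\<bar> \<le> \<bar>aeta n t \<eta>' s\<bar> + \<bar>\<Sum>k<n. (\<eta> k - \<eta>' k) * Pk n t k s\<bar>" by simp
    also have "\<dots> \<le> \<bar>aeta n t \<eta>' s\<bar> + (\<Sum>k<n. \<bar>\<eta> k - \<eta>' k\<bar> * \<bar>Pk n t k s\<bar>)"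
      using sum_abs[of "\<lambda>k. (\<eta> k - \<eta>' k) * Pk n t k s" "{..<n}"] by (simp add: abs_mult)
    finally have "mu s * \<bar>aeta n t \<eta> s\<bar> \<le> mu s * (\<bar>aeta n t \<eta>' s\<bar> + (\<Sum>k<n. \<bar>\<eta> k - \<eta>' k\<bar> * \<bar>Pk n t k s\<bar>))"
      using mu0[OF s] by (rule mult_left_mono)
    then show "mu s * \<bar>aeta n t \<eta> s\<bar> \<le> mu s * \<bar>aeta n t \<eta>' s\<bar> + (\<Sum>k<n. \<bar>\<eta> k - \<eta>' k\<bar> * (mu s * \<bar>Pk n t k s\<bar>))"
      by (simp add: algebra_simps sum_distrib_left)
  qed
  also have "\<dots> = Gf n t mu \<eta>' + (\<Sum>k<n. \<bar>\<eta> k - \<eta>' k\<bar> * Cc k)"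
  proof -
    have "integral {0..t} (\<lambda>s. mu s * \<bar>aeta n t \<eta>' s\<bar> + (\<Sum>k<n. \<bar>\<eta> k - \<eta>' k\<bar> * (mu s * \<bar>Pk n t k s\<bar>)))
        = integral {0..t} (\<lambda>s. mu s * \<bar>aeta n t \<eta>' s\<bar>) + integral {0..t} (\<lambda>s. \<Sum>k<n. \<bar>\<eta> k - \<eta>' k\<bar> * (mu s * \<bar>Pk n t k s\<bar>))"
      by (rule integral_add) (intro intc continuous_intros cmu cont_aeta cont_Pk)+
    also have "integral {0..t} (\<lambda>s. \<Sum>k<n. \<bar>\<eta> k - \<eta>' k\<bar> * (mu s * \<bar>Pk n t k s\<bar>)) = (\<Sum>k<n. integral {0..t} (\<lambda>s. \<bar>\<eta> k - \<eta>' k\<bar> * (mu s * \<bar>Pk n t k s\<bar>)))"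
      by (rule integral_sum) (auto intro!: intc continuous_intros cmu cont_Pk)
    finally show ?thesis by (simp add: Gf_def Cc_def)
  qed
  finally show ?thesis .
qed

lemma G_lip: "\<bar>Gf n t mu \<eta> - Gf n t mu \<eta>'\<bar> \<le> (\<Sum>k<n. \<bar>\<eta> k - \<eta>' k\<bar> * Cc k)"
proof -
  have "Gf n t mu \<eta>' \<le> Gf n t mu \<eta> + (\<Sum>k<n. \<bar>\<eta>' k - \<eta> k\<bar> * Cc k)" by (rule G_lip1)
  moreover have "(\<Sum>k<n. \<bar>\<eta>' k - \<eta> k\<bar> * Cc k) = (\<Sum>k<n. \<bar>\<eta> k - \<eta>' k\<bar> * Cc k)" by (simp add: abs_minus_commute)
  ultimately show ?thesis using G_lip1[of \<eta> \<eta>'] by linarith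
qed

end


context
  fixes n :: nat and t :: real and mu w :: "real \<Rightarrow> real"
  assumes t: "t > 0" and cmu: "continuous_on UNIV mu" and cw: "continuous_on UNIV w"
    and wb: "\<And>s. s \<in> {0..t} \<Longrightarrow> \<bar>w s\<bar> \<le> mu s"
begin

lemmas dot_le' = dot_le[OF t cmu cw wb, where n=n] and G_nonneg' = G_nonneg[OF t cmu cw wb, where n=n]
   and G_sc' = G_sc[OF t cmu cw wb, where n=n] and G_lip' = G_lip[OF t cmu cw wb, where n=n]

lemma maximizer:
  assumes k0: "k0 < n" "pvec n t w k0 \<noteq> 0"
  shows "\<exists>R l. 0 < R \<and> R \<le> 1 \<and> (\<Sum>k<n. \<bar>l k\<bar>) = 1 \<and> dotp n t w l = R * Gf n t mu l \<and>
           (\<forall>\<eta>. dotp n t w \<eta> \<le> R * Gf n t mu \<eta>)"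
proof -
  define dot where "dot = dotp n t w"
  define G where "G = Gf n t mu"
  define Sph where "Sph = {\<eta>. (\<Sum>k<n. \<bar>\<eta> k\<bar>) = 1 \<and> 0 < G \<eta>}"
  define ratio where "ratio \<eta> = dot \<eta> / G \<eta>" for \<eta>
  define R where "R = Sup (ratio ` Sph)"
  define p where "p = pvec n t w k0"
  define e0 where "e0 = (\<lambda>k. if k = k0 then sgn p else 0)"
  have dot_e0: "dot e0 = \<bar>p\<bar>"
  proof -
    have "dot e0 = (\<Sum>k<n. if k = k0 then sgn p * pvec n t w k else 0)"
      unfolding dot_def dotp_def e0_def by (intro sum.cong) auto
    also have "\<dots> = sgn p * p" using k0 by (simp add: sum.delta p_def)
    finally show ?thesis by (simp add: abs_if sgn_if)
  qed
  have abs_e0: "(\<Sum>k<n. \<bar>e0 k\<bar>) = 1"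
  proof -
    have "(\<Sum>k<n. \<bar>e0 k\<bar>) = (\<Sum>k<n. if k = k0 then \<bar>sgn p\<bar> else 0)"
      unfolding e0_def by (intro sum.cong) auto
    also have "\<dots> = 1" using k0 by (simp add: sum.delta p_def)
    finally show ?thesis .
  qed
  have ppos: "0 < \<bar>p\<bar>" using k0 by (simp add: p_def)
  have G_e0: "0 < G e0" using dot_le'[where \<eta>=e0] dot_e0 ppos by (simp add: dot_def G_def)
  have e0S: "e0 \<in> Sph" using abs_e0 G_e0 by (simp add: Sph_def)
  have ratio_le1: "ratio \<eta> \<le> 1" if "\<eta> \<in> Sph" for \<eta>
    using that dot_le'[where \<eta>=\<eta>] by (simp add: Sph_def ratio_def dot_def G_def)
  have ne: "ratio ` Sph \<noteq> {}" using e0S by blast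
  have bdd: "bdd_above (ratio ` Sph)" using ratio_le1 by (intro bdd_aboveI[of _ 1]) auto
  have R_le1: "R \<le> 1" unfolding R_def using ne ratio_le1 by (intro cSup_least) auto
  have "ratio e0 \<le> R" unfolding R_def using bdd e0S by (intro cSup_upper) auto
  moreover have "0 < ratio e0" using G_e0 dot_e0 ppos by (simp add: ratio_def)
  ultimately have R_pos: "0 < R" by simp
  have dot_leR: "dot \<eta> \<le> R * G \<eta>" for \<eta>
  proof (cases "G \<eta> = 0")
    case True then show ?thesis using dot_le'[where \<eta>=\<eta>] by (simp add: dot_def G_def)
  next
    case False
    then have Gp: "0 < G \<eta>" using G_nonneg'[where \<eta>=\<eta>] by (simp add: G_def)
    define N where "N = (\<Sum>k<n. \<bar>\<eta> k\<bar>)"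
    have "N \<noteq> 0"
    proof
      assume "N = 0"
      then have "\<forall>k\<in>{..<n}. \<bar>\<eta> k\<bar> = 0" unfolding N_def by (subst sum_nonneg_eq_0_iff[symmetric]) auto
      then have "aeta n t \<eta> = (\<lambda>_. 0)" by (auto simp: fun_eq_iff intro!: aeta_zero)
      then have "G \<eta> = 0" by (simp add: G_def Gf_def)
      with Gp show False by simp
    qed
    moreover have "0 \<le> N" unfolding N_def by (intro sum_nonneg) auto
    ultimately have Np: "0 < N" by simp
    define \<eta>' where "\<eta>' = (\<lambda>k. (1 / N) * \<eta> k)"
    have G': "G \<eta>' = G \<eta> / N" unfolding \<eta>'_def G_def using G_sc'[of "1 / N" \<eta>] Np by simp
    have d': "dot \<eta>' = dot \<eta> / N" unfolding \<eta>'_def dot_def by (simp add: dotp_def sum_divide_distrib)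
    have "(\<Sum>k<n. \<bar>\<eta>' k\<bar>) = (\<Sum>k<n. (1 / N) * \<bar>\<eta> k\<bar>)" unfolding \<eta>'_def using Np by (simp add: abs_mult)
    also have "\<dots> = 1" using Np by (simp add: sum_divide_distrib[symmetric] N_def[symmetric])
    finally have "\<eta>' \<in> Sph" using G' Gp Np by (simp add: Sph_def)
    then have "ratio \<eta>' \<le> R" unfolding R_def using bdd by (intro cSup_upper) auto
    moreover have "ratio \<eta>' = ratio \<eta>" unfolding ratio_def G' d' using Np by simp
    ultimately have "dot \<eta> / G \<eta> \<le> R" by (simp add: ratio_def)
    then show ?thesis using Gp by (simp add: pos_divide_le_eq)
  qed
  have "\<forall>j. \<exists>\<eta>\<in>Sph. R - inverse (real (Suc j)) < ratio \<eta>"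
  proof
    fix j
    have "R - inverse (real (Suc j)) < R" by simp
    then show "\<exists>\<eta>\<in>Sph. R - inverse (real (Suc j)) < ratio \<eta>"
      using less_cSupD[OF ne] unfolding R_def by auto
  qed
  then obtain \<eta>s where \<eta>s: "\<And>j. \<eta>s j \<in> Sph" "\<And>j. R - inverse (real (Suc j)) < ratio (\<eta>s j)" by metis
  have bnd: "\<bar>\<eta>s j k\<bar> \<le> 1" if "k < n" for j k
    using \<eta>s(1)[of j] that member_le_sum[of k "{..<n}" "\<lambda>k. \<bar>\<eta>s j k\<bar>"] by (auto simp: Sph_def)
  obtain r l where rl: "strict_mono r" "\<And>k. k < n \<Longrightarrow> (\<lambda>j. \<eta>s (r j) k) \<longlonglongrightarrow> l k"
    using box_subseq[of n "\<lambda>j k. \<eta>s j k" 1] bnd by blast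
  have "(\<lambda>j. \<Sum>k<n. \<bar>\<eta>s (r j) k\<bar>) \<longlonglongrightarrow> (\<Sum>k<n. \<bar>l k\<bar>)"
    by (intro tendsto_sum tendsto_rabs rl(2)) simp
  moreover have "(\<lambda>j. \<Sum>k<n. \<bar>\<eta>s (r j) k\<bar>) = (\<lambda>j. 1)" using \<eta>s(1) by (simp add: Sph_def)
  ultimately have l1: "(\<Sum>k<n. \<bar>l k\<bar>) = 1" using LIMSEQ_unique tendsto_const by metis
  have limdot: "(\<lambda>j. dot (\<eta>s (r j))) \<longlonglongrightarrow> dot l"
    unfolding dot_def dotp_def by (intro tendsto_sum tendsto_mult tendsto_const rl(2)) simp
  have limG: "(\<lambda>j. G (\<eta>s (r j))) \<longlonglongrightarrow> G l"
  proof -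
    have "(\<lambda>j. \<Sum>k<n. \<bar>\<eta>s (r j) k - l k\<bar> * Cc n t mu k) \<longlonglongrightarrow> (\<Sum>k<n. \<bar>l k - l k\<bar> * Cc n t mu k)"
      by (intro tendsto_sum tendsto_mult tendsto_const tendsto_rabs tendsto_diff rl(2)) simp
    then have z: "(\<lambda>j. \<Sum>k<n. \<bar>\<eta>s (r j) k - l k\<bar> * Cc n t mu k) \<longlonglongrightarrow> 0" by simp
    have "(\<lambda>j. G (\<eta>s (r j)) - G l) \<longlonglongrightarrow> 0"
      by (rule Lim_null_comparison[OF _ z]) (auto simp: G_def intro!: always_eventually G_lip')
    then show ?thesis by (rule LIM_zero_cancel)
  qed
  have limr: "(\<lambda>j. R - inverse (real (Suc (r j)))) \<longlonglongrightarrow> R"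
  proof -
    have "(\<lambda>j. inverse (real (Suc (r j)))) \<longlonglongrightarrow> 0"
      using LIMSEQ_subseq_LIMSEQ[OF LIMSEQ_inverse_real_of_nat rl(1)] by (simp add: o_def)
    then show ?thesis using tendsto_diff[OF tendsto_const, of _ 0 sequentially R] by simp
  qed
  have ev: "(R - inverse (real (Suc (r j)))) * G (\<eta>s (r j)) \<le> dot (\<eta>s (r j))" for j
  proof -
    have Gp: "0 < G (\<eta>s (r j))" using \<eta>s(1)[of "r j"] by (simp add: Sph_def)
    have "R - inverse (real (Suc (r j))) < dot (\<eta>s (r j)) / G (\<eta>s (r j))"
      using \<eta>s(2)[of "r j"] by (simp add: ratio_def)
    then show ?thesis using Gp by (simp add: pos_less_divide_eq less_imp_le)
  qed
  have "R * G l \<le> dot l"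
    by (rule tendsto_le[OF trivial_limit_sequentially limdot tendsto_mult[OF limr limG]])
       (rule always_eventually, use ev in blast)
  with dot_leR[of l] have eq: "dot l = R * G l" by simp
  show ?thesis
    using R_pos R_le1 l1 eq dot_leR unfolding dot_def G_def by blast
qed

end


context
  fixes n :: nat and t :: real and mu w :: "real \<Rightarrow> real"
  assumes t: "t > 0" and cmu: "continuous_on UNIV mu" and cw: "continuous_on UNIV w"
    and wb: "\<And>s. s \<in> {0..t} \<Longrightarrow> \<bar>w s\<bar> \<le> mu s"
begin

lemma mu0': "s \<in> {0..t} \<Longrightarrow> 0 \<le> mu s"
  using wb[of s] by linarith

lemma core:
  assumes n: "n \<ge> 1"
  shows "\<exists>\<sigma>\<in>Wset n t. \<exists>c\<in>{-1..1::real}. \<forall>k<n. pvec n t w k =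
           c * (\<Sum>i<n. (-1) ^ i * integral {sig_ext n t \<sigma> i..sig_ext n t \<sigma> (Suc i)} (\<lambda>s. mu s * Pk n t k s))"
proof (cases "\<forall>k<n. pvec n t w k = 0")
  case True
  define \<sigma>0 where "\<sigma>0 = vec (n - 1) (\<lambda>_. t)"
  have "\<sigma>0 \<in> Wset n t" unfolding Wset_def \<sigma>0_def sig_ext_def using t by auto
  then show ?thesis using True by (intro bexI[of _ \<sigma>0] bexI[of _ 0]) auto
next
  case False
  then obtain k0 where k0: "k0 < n" "pvec n t w k0 \<noteq> 0" by blast
  obtain R l where Rl: "0 < R" "R \<le> 1" "(\<Sum>k<n. \<bar>l k\<bar>) = 1" "dotp n t w l = R * Gf n t mu l"
    "\<And>\<eta>. dotp n t w \<eta> \<le> R * Gf n t mu \<eta>"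
    using maximizer[OF t cmu cw wb k0] by blast
  have lnz: "\<exists>k<n. l k \<noteq> 0"
  proof (rule ccontr)
    assume "\<not> (\<exists>k<n. l k \<noteq> 0)"
    then have "(\<Sum>k<n. \<bar>l k\<bar>) = 0" by simp
    with Rl(3) show False by simp
  qed
  define a where "a = aeta n t l"
  define Zr where "Zr = {s. a s = 0}"
  have finZ: "finite Zr" and cardZ: "card Zr \<le> n - 1"
    using aeta_poly_roots[OF lnz, of t] unfolding Zr_def a_def by auto
  obtain L c where L: "sorted L" "set L \<subseteq> {0..t}" "length L \<le> card (Zr \<inter> {0<..<t})" "c \<in> {-1,1}"
    "\<And>i s. i \<le> length L \<Longrightarrow> s \<in> {extL 0 t L i..extL 0 t L (Suc i)} \<Longrightarrow> 0 \<le> c * (-1) ^ i * a s"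
  proof -
    have "\<exists>L c. sorted L \<and> set L \<subseteq> {0..t} \<and> length L \<le> card (Zr \<inter> {0<..<t}) \<and> c \<in> {-1,1} \<and>
       (\<forall>i \<le> length L. \<forall>s\<in>{extL 0 t L i..extL 0 t L (Suc i)}. 0 \<le> c * (-1) ^ i * a s)"
      by (rule SC_aux[OF finZ refl]) (use t in \<open>auto simp: Zr_def a_def intro: cont_aeta\<close>)
    then show ?thesis using that by blast
  qed
  have lenL: "length L \<le> n - 1"
    using L(3) card_mono[OF finZ, of "Zr \<inter> {0<..<t}"] cardZ by auto
  define \<sigma> where "\<sigma> = vec (n - 1) (\<lambda>j. if j < length L then L ! j else t)"
  define S where "S i = sig_ext n t \<sigma> i" for i
  have S_eq: "S i = extL 0 t L i" if iN: "i \<le> n" for i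
  proof -
    consider "i = 0" | "0 < i" "i < n" | "i = n" using iN by (metis le_neq_implies_less neq0_conv)
    then show ?thesis
    proof cases
      case 1 then show ?thesis by (simp add: S_def sig_ext_def extL_def)
    next
      case 2 then show ?thesis using lenL by (auto simp: S_def sig_ext_def extL_def \<sigma>_def)
    next
      case 3 then show ?thesis using lenL n by (auto simp: S_def sig_ext_def extL_def)
    qed
  qed
  have S0: "S 0 = 0" by (simp add: S_def sig_ext_def)
  have Sn: "S n = t" using n by (simp add: S_def sig_ext_def)
  have Smono: "S i \<le> S (Suc i)" if "i < n" for i
    using S_eq[of i] S_eq[of "Suc i"] that extL_mono[OF L(1,2), of i] t by simp
  have Srange: "S i \<in> {0..t}" if "i \<le> n" for i
    using S_eq[OF that] extL_range[OF L(2)] t by simp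
  have \<sigma>W: "\<sigma> \<in> Wset n t"
    unfolding Wset_def using Smono by (auto simp: \<sigma>_def S_def)
  have split: "integral {0..t} F = (\<Sum>i<n. integral {S i..S (Suc i)} F)" if "continuous_on UNIV F" for F :: "real \<Rightarrow> real"
    using sum_intervals[of n S F, OF Smono that] S0 Sn by simp
  have sgn_prop: "0 \<le> c * (-1) ^ i * a s" if "i \<le> length L" "s \<in> {S i..S (Suc i)}" "i < n" for i s
    using L(5)[OF that(1)] that S_eq[of i] S_eq[of "Suc i"] by simp
  have degen: "S i = t \<and> S (Suc i) = t" if "length L < i" "i < n" for i
    using that S_eq[of i] S_eq[of "Suc i"] by (simp add: extL_def)
  have sgnpm: "c * (-1) ^ i \<in> {-1, 1::real}" for i
    using L(4) by (cases "even i") auto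
  define T where "T d = (\<Sum>i<n. (-1) ^ i * integral {S i..S (Suc i)} (\<lambda>s. mu s * aeta n t d s))" for d
  define h where "h d j s = mu s * max 0 (\<bar>aeta n t d s\<bar> - real (Suc j) * \<bar>a s\<bar>)" for d j s
  have cont_h: "continuous_on UNIV (h d j)" for d j
    unfolding h_def[abs_def] a_def by (intro continuous_intros cmu cont_aeta)
  have key: "dotp n t w d \<le> R * c * T d + 2 * R * integral {0..t} (h d j)" for d j
  proof -
    define \<epsilon> where "\<epsilon> = inverse (real (Suc j))"
    have \<epsilon>p: "\<epsilon> > 0" by (simp add: \<epsilon>_def)
    have \<epsilon>K: "\<epsilon> * real (Suc j) = 1" by (simp add: \<epsilon>_def)
    define ld where "ld = (\<lambda>k. l k + \<epsilon> * d k)"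
    have ald: "aeta n t ld s = a s + \<epsilon> * aeta n t d s" for s
      unfolding ld_def a_def by (rule aeta_lin)
    have per: "integral {S i..S (Suc i)} (\<lambda>s. mu s * \<bar>aeta n t ld s\<bar>) \<le>
        integral {S i..S (Suc i)} (\<lambda>s. mu s * \<bar>a s\<bar>) +
        \<epsilon> * (c * ((-1) ^ i * integral {S i..S (Suc i)} (\<lambda>s. mu s * aeta n t d s))) +
        2 * \<epsilon> * integral {S i..S (Suc i)} (h d j)" if i: "i < n" for i
    proof (cases "i \<le> length L")
      case True
      have "integral {S i..S (Suc i)} (\<lambda>s. mu s * \<bar>aeta n t ld s\<bar>) \<le>
         integral {S i..S (Suc i)} (\<lambda>s. mu s * \<bar>a s\<bar> + (\<epsilon> * (c * (-1) ^ i)) * (mu s * aeta n t d s) + (2 * \<epsilon>) * h d j s)"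
      proof (rule integral_le)
        show "(\<lambda>s. mu s * \<bar>aeta n t ld s\<bar>) integrable_on {S i..S (Suc i)}"
          by (intro intc continuous_intros cmu cont_aeta)
        show "(\<lambda>s. mu s * \<bar>a s\<bar> + (\<epsilon> * (c * (-1) ^ i)) * (mu s * aeta n t d s) + (2 * \<epsilon>) * h d j s) integrable_on {S i..S (Suc i)}"
          unfolding a_def by (intro intc continuous_intros cmu cont_aeta cont_h)
        fix s assume s: "s \<in> {S i..S (Suc i)}"
        have s0t: "s \<in> {0..t}" using s Srange[of i] Srange[of "Suc i"] i by auto
        have "\<bar>a s + \<epsilon> * aeta n t d s\<bar> \<le> \<bar>a s\<bar> + \<epsilon> * ((c * (-1) ^ i) * aeta n t d s) +
                 2 * \<epsilon> * max 0 (\<bar>aeta n t d s\<bar> - real (Suc j) * \<bar>a s\<bar>)"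
          by (rule pw_ineq[OF sgnpm sgn_prop[OF True s i] \<epsilon>p \<epsilon>K])
        then have "mu s * \<bar>a s + \<epsilon> * aeta n t d s\<bar> \<le> mu s * (\<bar>a s\<bar> + \<epsilon> * ((c * (-1) ^ i) * aeta n t d s) +
                 2 * \<epsilon> * max 0 (\<bar>aeta n t d s\<bar> - real (Suc j) * \<bar>a s\<bar>))"
          by (rule mult_left_mono) (rule mu0'[OF s0t])
        then show "mu s * \<bar>aeta n t ld s\<bar> \<le> mu s * \<bar>a s\<bar> + (\<epsilon> * (c * (-1) ^ i)) * (mu s * aeta n t d s) + (2 * \<epsilon>) * h d j s"
          unfolding ald h_def by (simp add: algebra_simps)
      qed
      also have "\<dots> = integral {S i..S (Suc i)} (\<lambda>s. mu s * \<bar>a s\<bar>) +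
        \<epsilon> * (c * ((-1) ^ i * integral {S i..S (Suc i)} (\<lambda>s. mu s * aeta n t d s))) +
        2 * \<epsilon> * integral {S i..S (Suc i)} (h d j)"
      proof -
        have i1: "(\<lambda>s. mu s * \<bar>a s\<bar>) integrable_on {S i..S (Suc i)}"
          unfolding a_def by (intro intc continuous_intros cmu cont_aeta)
        have i2: "(\<lambda>s. (\<epsilon> * (c * (-1) ^ i)) * (mu s * aeta n t d s)) integrable_on {S i..S (Suc i)}"
          by (intro intc continuous_intros cmu cont_aeta)
        have i3: "(\<lambda>s. (2 * \<epsilon>) * h d j s) integrable_on {S i..S (Suc i)}"
          by (intro intc continuous_intros cont_h)
        have e: "integral {S i..S (Suc i)} (\<lambda>s. mu s * ((- 1) ^ i * aeta n t d s)) =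
             (- 1) ^ i * integral {S i..S (Suc i)} (\<lambda>s. mu s * aeta n t d s)"
        proof -
          have "(\<lambda>s. mu s * ((- 1) ^ i * aeta n t d s)) = (\<lambda>s. (- 1) ^ i * (mu s * aeta n t d s))"
            by (simp add: mult_ac)
          then show ?thesis by simp
        qed
        show ?thesis
          using integral_add[OF integrable_add[OF i1 i2] i3] integral_add[OF i1 i2] e
          by (simp add: algebra_simps)
      qed
      finally show ?thesis .
    next
      case False
      then have "S i = t" "S (Suc i) = t" using degen[OF _ i] by auto
      then show ?thesis by simp
    qed
    have "Gf n t mu ld = (\<Sum>i<n. integral {S i..S (Suc i)} (\<lambda>s. mu s * \<bar>aeta n t ld s\<bar>))"
      unfolding Gf_def by (rule split) (intro continuous_intros cmu cont_aeta)
    also have "\<dots> \<le> (\<Sum>i<n. integral {S i..S (Suc i)} (\<lambda>s. mu s * \<bar>a s\<bar>) +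
        \<epsilon> * (c * ((-1) ^ i * integral {S i..S (Suc i)} (\<lambda>s. mu s * aeta n t d s))) +
        2 * \<epsilon> * integral {S i..S (Suc i)} (h d j))"
      by (rule sum_mono) (rule per, simp)
    also have "\<dots> = Gf n t mu l + \<epsilon> * c * T d + 2 * \<epsilon> * integral {0..t} (h d j)"
    proof -
      have "Gf n t mu l = (\<Sum>i<n. integral {S i..S (Suc i)} (\<lambda>s. mu s * \<bar>a s\<bar>))"
        unfolding Gf_def a_def by (rule split) (intro continuous_intros cmu cont_aeta)
      moreover have "integral {0..t} (h d j) = (\<Sum>i<n. integral {S i..S (Suc i)} (h d j))"
        by (rule split) (rule cont_h)
      ultimately show ?thesis
        by (simp add: sum.distrib T_def sum_distrib_left mult.assoc)
    qed
    finally have Gld: "Gf n t mu ld \<le> Gf n t mu l + \<epsilon> * c * T d + 2 * \<epsilon> * integral {0..t} (h d j)" .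
    have "dotp n t w ld = dotp n t w l + \<epsilon> * dotp n t w d"
      by (simp add: dotp_def ld_def algebra_simps sum.distrib sum_distrib_left)
    then have "R * Gf n t mu l + \<epsilon> * dotp n t w d \<le> R * Gf n t mu ld"
      using Rl(4) Rl(5)[of ld] by simp
    also have "\<dots> \<le> R * (Gf n t mu l + \<epsilon> * c * T d + 2 * \<epsilon> * integral {0..t} (h d j))"
      using Gld Rl(1) by (intro mult_left_mono) auto
    finally have "\<epsilon> * dotp n t w d \<le> \<epsilon> * (R * c * T d + 2 * R * integral {0..t} (h d j))"
      by (simp add: algebra_simps)
    then show ?thesis using \<epsilon>p by simp
  qed
  have Hlim: "(\<lambda>j. integral {0..t} (h d j)) \<longlonglongrightarrow> 0" for d
  proof -
    define g where "g s = (if a s = 0 then mu s * \<bar>aeta n t d s\<bar> else 0)" for s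
    have "(\<lambda>j. integral {0..t} (h d j)) \<longlonglongrightarrow> integral {0..t} g"
    proof (rule dominated_convergence(2))
      show "h d j integrable_on {0..t}" for j by (intro intc cont_h)
      show "(\<lambda>s. mu s * \<bar>aeta n t d s\<bar>) integrable_on {0..t}"
        by (intro intc continuous_intros cmu cont_aeta)
      show "norm (h d j s) \<le> mu s * \<bar>aeta n t d s\<bar>" if "s \<in> {0..t}" for j s
      proof -
        have m: "0 \<le> mu s" using mu0'[OF that] .
        have "0 \<le> max 0 (\<bar>aeta n t d s\<bar> - real (Suc j) * \<bar>a s\<bar>)" by simp
        moreover have "max 0 (\<bar>aeta n t d s\<bar> - real (Suc j) * \<bar>a s\<bar>) \<le> \<bar>aeta n t d s\<bar>" by simp
        ultimately show ?thesis using m unfolding h_def by (simp add: abs_mult mult_left_mono)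
      qed
      show "(\<lambda>j. h d j s) \<longlonglongrightarrow> g s" if "s \<in> {0..t}" for s
      proof (cases "a s = 0")
        case True then show ?thesis by (simp add: h_def g_def)
      next
        case False
        then have ap: "0 < \<bar>a s\<bar>" by simp
        have "eventually (\<lambda>j. h d j s = g s) sequentially"
          unfolding eventually_sequentially
        proof (intro exI allI impI)
          fix j assume j: "nat \<lceil>\<bar>aeta n t d s\<bar> / \<bar>a s\<bar>\<rceil> \<le> j"
          have "\<bar>aeta n t d s\<bar> / \<bar>a s\<bar> \<le> real (Suc j)"
            using j real_nat_ceiling_ge[of "\<bar>aeta n t d s\<bar> / \<bar>a s\<bar>"] by linarith
          then have "\<bar>aeta n t d s\<bar> \<le> real (Suc j) * \<bar>a s\<bar>" using ap by (simp add: divide_le_eq)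
          then show "h d j s = g s" using False by (simp add: h_def g_def)
        qed
        then show ?thesis by (rule tendsto_eventually)
      qed
    qed
    moreover have "integral {0..t} g = 0"
    proof -
      have "(g has_integral 0) {0..t}"
        by (rule has_integral_spike_finite[OF finZ _ has_integral_0]) (auto simp: g_def Zr_def)
      then show ?thesis by (rule integral_unique)
    qed
    ultimately show ?thesis by simp
  qed
  have main_d: "dotp n t w d \<le> R * c * T d" for d
  proof -
    have "(\<lambda>j. R * c * T d + 2 * R * integral {0..t} (h d j)) \<longlonglongrightarrow> R * c * T d + 2 * R * 0"
      by (intro tendsto_intros Hlim)
    then show ?thesis
      by (intro tendsto_le[OF trivial_limit_sequentially _ tendsto_const]) (auto intro: always_eventually key)
  qed
  define Tk where "Tk k = (\<Sum>i<n. (-1) ^ i * integral {S i..S (Suc i)} (\<lambda>s. mu s * Pk n t k s))" for k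
  have final: "pvec n t w k = R * c * Tk k" if k: "k < n" for k
  proof -
    define ek where "ek = (\<lambda>j. if j = k then 1 else (0::real))"
    have dek: "dotp n t w ek = pvec n t w k"
    proof -
      have "dotp n t w ek = (\<Sum>j<n. if j = k then pvec n t w j else 0)"
        unfolding dotp_def ek_def by (intro sum.cong) auto
      then show ?thesis using k by (simp add: sum.delta)
    qed
    have dmek: "dotp n t w (\<lambda>j. (-1) * ek j) = - pvec n t w k"
      using dek by (simp add: dotp_def sum_negf)
    have Tek: "T ek = Tk k" unfolding T_def Tk_def ek_def using aeta_unit[OF k] by simp
    have Tmek: "T (\<lambda>j. (-1) * ek j) = - Tk k"
      unfolding T_def Tk_def using aeta_sc[of n t "-1" ek] aeta_unit[OF k] by (simp add: ek_def sum_negf)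
    show ?thesis using main_d[of ek] main_d[of "\<lambda>j. (-1) * ek j"] dek dmek Tek Tmek by simp
  qed
  show ?thesis
  proof (intro bexI[OF _ \<sigma>W] bexI[of _ "R * c"] allI impI)
    fix k assume "k < n"
    then show "pvec n t w k = R * c * (\<Sum>i<n. (-1) ^ i * integral {sig_ext n t \<sigma> i..sig_ext n t \<sigma> (Suc i)} (\<lambda>s. mu s * Pk n t k s))"
      using final unfolding Tk_def S_def by simp
  next
    show "R * c \<in> {-1..1}" using L(4) Rl(1,2) by auto
  qed
qed

end


lemma pow_entry_bound:
  fixes B :: "real mat"
  assumes B: "B \<in> carrier_mat n n"
  defines "M \<equiv> (\<Sum>a<n. \<Sum>b<n. \<bar>B $$ (a, b)\<bar>) + 1"
  shows "i < n \<Longrightarrow> j < n \<Longrightarrow> \<bar>(B ^\<^sub>m k) $$ (i, j)\<bar> \<le> M ^ k"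
proof (induction k arbitrary: i j)
  case 0
  then show ?case using B by (auto simp: M_def)
next
  case (Suc k)
  have Mge: "0 \<le> M" unfolding M_def by (intro add_nonneg_nonneg sum_nonneg) auto
  have colj: "(\<Sum>l<n. \<bar>B $$ (l, j)\<bar>) \<le> M"
  proof -
    have "(\<Sum>l<n. \<bar>B $$ (l, j)\<bar>) \<le> (\<Sum>l<n. \<Sum>b<n. \<bar>B $$ (l, b)\<bar>)"
      by (intro sum_mono member_le_sum[where f="\<lambda>b. \<bar>B $$ (_, b)\<bar>"]) (use Suc.prems in auto)
    then show ?thesis unfolding M_def by simp
  qed
  have "(B ^\<^sub>m Suc k) $$ (i, j) = (\<Sum>l<n. (B ^\<^sub>m k) $$ (i, l) * B $$ (l, j))"
    using B Suc.prems pow_carrier_mat[OF B, of k]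
    by (auto simp: scalar_prod_def lessThan_atLeast0 intro!: sum.cong)
  then have "\<bar>(B ^\<^sub>m Suc k) $$ (i, j)\<bar> \<le> (\<Sum>l<n. \<bar>(B ^\<^sub>m k) $$ (i, l)\<bar> * \<bar>B $$ (l, j)\<bar>)"
    by (metis (no_types, lifting) abs_mult sum.cong sum_abs)
  also have "\<dots> \<le> (\<Sum>l<n. M ^ k * \<bar>B $$ (l, j)\<bar>)"
    by (intro sum_mono mult_right_mono Suc.IH Suc.prems) auto
  also have "\<dots> = M ^ k * (\<Sum>l<n. \<bar>B $$ (l, j)\<bar>)" by (simp add: sum_distrib_left)
  also have "\<dots> \<le> M ^ k * M" using colj Mge by (intro mult_left_mono) auto
  finally show ?case by (simp add: mult.commute)
qed

lemma matexp_cont: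
  fixes B :: "real mat"
  assumes B: "B \<in> carrier_mat n n" and ij: "i < n" "j < n"
  shows "continuous_on S (\<lambda>r. mat_exp n r B $$ (i, j))"
proof -
  define M where "M = (\<Sum>a<n. \<Sum>b<n. \<bar>B $$ (a, b)\<bar>) + 1"
  define c where "c k = (B ^\<^sub>m k) $$ (i, j) / fact k" for k
  have bnd: "\<bar>(B ^\<^sub>m k) $$ (i, j)\<bar> \<le> M ^ k" for k
    unfolding M_def by (rule pow_entry_bound[OF B ij])
  have Mge: "0 \<le> M" unfolding M_def by (intro add_nonneg_nonneg sum_nonneg) auto
  have summ: "summable (\<lambda>k. c k * y ^ k)" for y :: real
  proof (rule summable_comparison_test')
    show "summable (\<lambda>k. inverse (fact k) * (M * \<bar>y\<bar>) ^ k)" by (rule summable_exp)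
    fix k :: nat
    have "norm (c k * y ^ k) = \<bar>(B ^\<^sub>m k) $$ (i, j)\<bar> * \<bar>y\<bar> ^ k / fact k"
      by (simp add: c_def abs_mult power_abs)
    also have "\<dots> \<le> M ^ k * \<bar>y\<bar> ^ k / fact k"
      by (intro divide_right_mono mult_right_mono bnd) auto
    also have "\<dots> = inverse (fact k) * (M * \<bar>y\<bar>) ^ k" by (simp add: power_mult_distrib divide_inverse mult_ac)
    finally show "norm (c k * y ^ k) \<le> inverse (fact k) * (M * \<bar>y\<bar>) ^ k" .
  qed
  have eq: "mat_exp n r B $$ (i, j) = (\<Sum>k. c k * r ^ k)" for r
    using ij by (simp add: mat_exp_def c_def mult_ac)
  have "continuous_on UNIV (\<lambda>r. \<Sum>k. c k * r ^ k)"
    by (intro continuous_at_imp_continuous_on ballI isCont_powser_converges_everywhere summ)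
  then show ?thesis unfolding eq by (rule continuous_on_subset) simp
qed


lemma clamp_bound:
  fixes F lo hi \<delta> K :: real
  assumes "lo \<le> hi" "\<delta> > 0" "K * \<delta> = (hi - lo) / 2"
  shows "F * max lo (min hi ((lo + hi) / 2 - K * F)) \<le> min (F * lo) (F * hi) + \<delta> * (hi - lo)"
proof -
  define v where "v = max lo (min hi ((lo + hi) / 2 - K * F))"
  have "0 \<le> K * \<delta>" using assms(1,3) by simp
  then have K0: "0 \<le> K" using assms(2) by (simp add: zero_le_mult_iff)
  have vr: "lo \<le> v" "v \<le> hi" using assms(1) by (auto simp: v_def)
  consider "F \<ge> \<delta>" | "F \<le> -\<delta>" | "\<bar>F\<bar> < \<delta>" by linarith
  then have "F * v \<le> min (F * lo) (F * hi) + \<delta> * (hi - lo)"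
  proof cases
    case 1
    have "K * \<delta> \<le> K * F" using 1 K0 by (rule mult_left_mono)
    then have "(lo + hi) / 2 - K * F \<le> lo" using assms(3) by (simp add: field_simps)
    then have "v = lo" unfolding v_def using assms(1) by simp
    moreover have "F * lo \<le> F * hi" using 1 assms by (intro mult_left_mono) auto
    ultimately show ?thesis using assms by (simp add: min_def)
  next
    case 2
    have "K * \<delta> \<le> K * (- F)" using 2 K0 by (intro mult_left_mono) auto
    then have "hi \<le> (lo + hi) / 2 - K * F" using assms(3) by (simp add: field_simps)
    then have "v = hi" unfolding v_def using assms(1) by simp
    moreover have "F * hi \<le> F * lo" using 2 assms by (intro mult_left_mono_neg) auto
    ultimately show ?thesis using assms by (simp add: min_def)
  next
    case 3
    show ?thesis
    proof (cases "F \<ge> 0")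
      case True
      have "F * (v - lo) \<le> \<delta> * (hi - lo)"
        using 3 True vr by (intro mult_mono) auto
      moreover have "F * lo \<le> F * hi" using True assms by (intro mult_left_mono) auto
      ultimately show ?thesis by (simp add: min_def algebra_simps)
    next
      case False
      have "(- F) * (hi - v) \<le> \<delta> * (hi - lo)"
        using 3 False vr by (intro mult_mono) auto
      moreover have "F * hi \<le> F * lo" using False assms by (intro mult_left_mono_neg) auto
      ultimately show ?thesis by (simp add: min_def algebra_simps)
    qed
  qed
  then show ?thesis unfolding v_def .
qed

lemma sup_formula:
  fixes F :: "real \<Rightarrow> real" and lo hi s :: real
  assumes lohi: "lo \<le> hi" and s0: "0 \<le> s" and cF: "continuous_on {0..s} F"
  shows "Sup {v s - integral {0..s} (\<lambda>\<tau>. F \<tau> * v \<tau>) | v. admissible_v lo hi s v}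
         = hi - integral {0..s} (\<lambda>\<tau>. min (F \<tau> * lo) (F \<tau> * hi))"
proof (rule cSup_eq_non_empty)
  let ?B = "hi - integral {0..s} (\<lambda>\<tau>. min (F \<tau> * lo) (F \<tau> * hi))"
  have adm_c: "admissible_v lo hi s (\<lambda>_. hi)" using lohi by (simp add: admissible_v_def)
  then show "{v s - integral {0..s} (\<lambda>\<tau>. F \<tau> * v \<tau>) | v. admissible_v lo hi s v} \<noteq> {}" by blast
  have imin: "(\<lambda>\<tau>. min (F \<tau> * lo) (F \<tau> * hi)) integrable_on {0..s}"
    by (intro integrable_continuous_interval continuous_intros cF)
  show "x \<le> ?B" if "x \<in> {v s - integral {0..s} (\<lambda>\<tau>. F \<tau> * v \<tau>) | v. admissible_v lo hi s v}" for x
  proof -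
    from that obtain v where v: "admissible_v lo hi s v" "x = v s - integral {0..s} (\<lambda>\<tau>. F \<tau> * v \<tau>)" by blast
    have cv: "continuous_on {0..s} v" and vb: "\<And>\<tau>. \<tau> \<in> {0..s} \<Longrightarrow> lo \<le> v \<tau> \<and> v \<tau> \<le> hi"
      using v(1) by (auto simp: admissible_v_def)
    have "v s \<le> hi" using vb[of s] s0 by auto
    moreover have "integral {0..s} (\<lambda>\<tau>. min (F \<tau> * lo) (F \<tau> * hi)) \<le> integral {0..s} (\<lambda>\<tau>. F \<tau> * v \<tau>)"
    proof (rule integral_le[OF imin])
      show "(\<lambda>\<tau>. F \<tau> * v \<tau>) integrable_on {0..s}" by (intro integrable_continuous_interval continuous_intros cF cv)
      fix \<tau> assume "\<tau> \<in> {0..s}"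
      then have "lo \<le> v \<tau>" "v \<tau> \<le> hi" using vb by auto
      then show "min (F \<tau> * lo) (F \<tau> * hi) \<le> F \<tau> * v \<tau>"
        by (cases "F \<tau> \<ge> 0") (auto simp: min_def intro: mult_left_mono mult_left_mono_neg)
    qed
    ultimately show ?thesis using v(2) by simp
  qed
  show "?B \<le> y" if ub: "\<And>x. x \<in> {v s - integral {0..s} (\<lambda>\<tau>. F \<tau> * v \<tau>) | v. admissible_v lo hi s v} \<Longrightarrow> x \<le> y" for y
  proof (rule ccontr)
    assume "\<not> ?B \<le> y"
    then have gam: "0 < ?B - y" by simp
    define \<gamma> where "\<gamma> = ?B - y"
    have \<gamma>p: "0 < \<gamma>" using gam by (simp add: \<gamma>_def)
    have mem: "v s - integral {0..s} (\<lambda>\<tau>. F \<tau> * v \<tau>) \<le> y" if "admissible_v lo hi s v" for v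
      using ub that by blast
    show False
    proof (cases "lo = hi \<or> s = 0")
      case True
      have "hi - integral {0..s} (\<lambda>\<tau>. F \<tau> * hi) \<le> y" using mem[OF adm_c] by simp
      moreover have "integral {0..s} (\<lambda>\<tau>. F \<tau> * hi) = integral {0..s} (\<lambda>\<tau>. min (F \<tau> * lo) (F \<tau> * hi))"
        using True by auto
      ultimately show False using \<gamma>p \<gamma>_def by simp
    next
      case False
      then have D: "0 < hi - lo" and sp: "0 < s" using lohi s0 by auto
      define D where "D = hi - lo"
      obtain Mb where Mb: "0 \<le> Mb" "\<And>\<tau>. \<tau> \<in> {0..s} \<Longrightarrow> norm (F \<tau>) \<le> Mb"
        using continuous_on_compact_bound[OF compact_Icc cF] by metis
      define \<delta> where "\<delta> = \<gamma> / (4 * (s * D + 1))"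
      have sDp: "0 \<le> s * D" using sp D by (simp add: D_def)
      have \<delta>p: "0 < \<delta>" unfolding \<delta>_def using \<gamma>p sDp by simp
      have sd: "s * \<delta> * D \<le> \<gamma> / 4"
      proof -
        have "s * \<delta> * D = \<gamma> * (s * D) / (4 * (s * D + 1))" by (simp add: \<delta>_def)
        also have "\<dots> \<le> \<gamma> * (s * D + 1) / (4 * (s * D + 1))"
          using \<gamma>p sDp by (intro divide_right_mono mult_left_mono) auto
        also have "\<dots> = \<gamma> / 4" using sDp by (simp add: field_simps)
        finally show ?thesis .
      qed
      define K where "K = D / (2 * \<delta>)"
      have K\<delta>: "K * \<delta> = (hi - lo) / 2" using \<delta>p by (simp add: K_def D_def)
      define h where "h = min s (\<gamma> / (4 * (Mb * D + 1)))"
      have MDp: "0 \<le> Mb * D" using Mb(1) D by (simp add: D_def)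
      have hp: "0 < h" unfolding h_def using sp \<gamma>p MDp by simp
      have hs: "h \<le> s" unfolding h_def by simp
      have hM: "h * Mb * D \<le> \<gamma> / 4"
      proof -
        have "h * (Mb * D) \<le> (\<gamma> / (4 * (Mb * D + 1))) * (Mb * D)"
          by (rule mult_right_mono[OF _ MDp]) (simp add: h_def)
        then have "h * Mb * D \<le> (\<gamma> / (4 * (Mb * D + 1))) * (Mb * D)" by (simp add: mult.assoc)
        also have "\<dots> = \<gamma> * (Mb * D) / (4 * (Mb * D + 1))" by simp
        also have "\<dots> \<le> \<gamma> * (Mb * D + 1) / (4 * (Mb * D + 1))"
          using \<gamma>p MDp by (intro divide_right_mono mult_left_mono) auto
        also have "\<dots> = \<gamma> / 4" using MDp by (simp add: field_simps)
        finally show ?thesis .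
      qed
      define vK where "vK \<tau> = max lo (min hi ((lo + hi) / 2 - K * F \<tau>))" for \<tau>
      define v where "v \<tau> = min hi (max (vK \<tau>) (hi - (D / h) * (s - \<tau>)))" for \<tau>
      have cvK: "continuous_on {0..s} vK" unfolding vK_def[abs_def] by (intro continuous_intros cF)
      have cv: "continuous_on {0..s} v" unfolding v_def[abs_def] by (intro continuous_intros cvK)
      have vKr: "lo \<le> vK \<tau>" "vK \<tau> \<le> hi" for \<tau> using lohi by (auto simp: vK_def)
      have vr: "lo \<le> v \<tau>" "v \<tau> \<le> hi" for \<tau> using lohi vKr[of \<tau>] by (auto simp: v_def)
      have adm: "admissible_v lo hi s v" using cv vr by (simp add: admissible_v_def)
      have vs: "v s = hi" using vKr[of s] by (simp add: v_def)
      have veq: "v \<tau> = vK \<tau>" if "\<tau> \<le> s - h" for \<tau>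
      proof -
        have "D / h * h \<le> D / h * (s - \<tau>)" using that hp D by (intro mult_left_mono) (auto simp: D_def)
        then have "hi - (D / h) * (s - \<tau>) \<le> lo" using hp by (simp add: D_def)
        then show ?thesis using vKr[of \<tau>] by (simp add: v_def)
      qed
      have pwK: "F \<tau> * vK \<tau> \<le> min (F \<tau> * lo) (F \<tau> * hi) + \<delta> * D" for \<tau>
        unfolding vK_def D_def by (rule clamp_bound[OF lohi \<delta>p K\<delta>])
      have pwT: "F \<tau> * v \<tau> \<le> min (F \<tau> * lo) (F \<tau> * hi) + \<delta> * D + Mb * D" if "\<tau> \<in> {0..s}" for \<tau>
      proof -
        have "F \<tau> * (v \<tau> - vK \<tau>) \<le> \<bar>F \<tau>\<bar> * \<bar>v \<tau> - vK \<tau>\<bar>" by (metis abs_ge_self abs_mult)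
        also have "\<dots> \<le> Mb * D"
          using Mb(2)[OF that] vr[of \<tau>] vKr[of \<tau>] by (intro mult_mono) (auto simp: D_def)
        finally show ?thesis using pwK[of \<tau>] by (simp add: algebra_simps)
      qed
      have cFv: "continuous_on {0..s} (\<lambda>\<tau>. F \<tau> * v \<tau>)" by (intro continuous_intros cF cv)
      have cmin: "continuous_on {0..s} (\<lambda>\<tau>. min (F \<tau> * lo) (F \<tau> * hi) + \<delta> * D)" by (intro continuous_intros cF)
      have sub1: "{0..s - h} \<subseteq> {0..s}" and sub2: "{s - h..s} \<subseteq> {0..s}" using hs hp by auto
      have I1: "integral {0..s - h} (\<lambda>\<tau>. F \<tau> * v \<tau>) \<le> integral {0..s - h} (\<lambda>\<tau>. min (F \<tau> * lo) (F \<tau> * hi) + \<delta> * D)"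
      proof (rule integral_le)
        show "(\<lambda>\<tau>. F \<tau> * v \<tau>) integrable_on {0..s - h}"
          by (rule integrable_continuous_interval) (rule continuous_on_subset[OF cFv sub1])
        show "(\<lambda>\<tau>. min (F \<tau> * lo) (F \<tau> * hi) + \<delta> * D) integrable_on {0..s - h}"
          by (rule integrable_continuous_interval) (rule continuous_on_subset[OF cmin sub1])
        fix \<tau> assume "\<tau> \<in> {0..s - h}"
        then show "F \<tau> * v \<tau> \<le> min (F \<tau> * lo) (F \<tau> * hi) + \<delta> * D" using veq[of \<tau>] pwK[of \<tau>] by simp
      qed
      have I2: "integral {s - h..s} (\<lambda>\<tau>. F \<tau> * v \<tau>) \<le> integral {s - h..s} (\<lambda>\<tau>. (min (F \<tau> * lo) (F \<tau> * hi) + \<delta> * D) + Mb * D)"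
      proof (rule integral_le)
        show "(\<lambda>\<tau>. F \<tau> * v \<tau>) integrable_on {s - h..s}"
          by (rule integrable_continuous_interval) (rule continuous_on_subset[OF cFv sub2])
        show "(\<lambda>\<tau>. (min (F \<tau> * lo) (F \<tau> * hi) + \<delta> * D) + Mb * D) integrable_on {s - h..s}"
          by (rule integrable_continuous_interval) (intro continuous_intros continuous_on_subset[OF cmin sub2])
        fix \<tau> assume "\<tau> \<in> {s - h..s}"
        then show "F \<tau> * v \<tau> \<le> (min (F \<tau> * lo) (F \<tau> * hi) + \<delta> * D) + Mb * D" using pwT[of \<tau>] hs by simp
      qed
      have I2': "integral {s - h..s} (\<lambda>\<tau>. (min (F \<tau> * lo) (F \<tau> * hi) + \<delta> * D) + Mb * D)
          = integral {s - h..s} (\<lambda>\<tau>. min (F \<tau> * lo) (F \<tau> * hi) + \<delta> * D) + h * (Mb * D)"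
      proof -
        have "integral {s - h..s} (\<lambda>\<tau>. (min (F \<tau> * lo) (F \<tau> * hi) + \<delta> * D) + Mb * D)
          = integral {s - h..s} (\<lambda>\<tau>. min (F \<tau> * lo) (F \<tau> * hi) + \<delta> * D) + integral {s - h..s} (\<lambda>\<tau>. Mb * D)"
          by (rule integral_add) (auto intro!: integrable_continuous_interval continuous_on_subset[OF cmin sub2])
        then show ?thesis using hp by simp
      qed
      have comb: "integral {0..s - h} G + integral {s - h..s} G = integral {0..s} G"
        if "continuous_on {0..s} G" for G :: "real \<Rightarrow> real"
        by (rule Henstock_Kurzweil_Integration.integral_combine) (use hs hp that in \<open>auto intro: integrable_continuous_interval\<close>)
      have "integral {0..s} (\<lambda>\<tau>. F \<tau> * v \<tau>) \<le> integral {0..s} (\<lambda>\<tau>. min (F \<tau> * lo) (F \<tau> * hi) + \<delta> * D) + h * (Mb * D)"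
        using I1 I2 I2' comb[OF cFv] comb[OF cmin] by linarith
      also have "integral {0..s} (\<lambda>\<tau>. min (F \<tau> * lo) (F \<tau> * hi) + \<delta> * D) = integral {0..s} (\<lambda>\<tau>. min (F \<tau> * lo) (F \<tau> * hi)) + s * (\<delta> * D)"
        using integral_add[OF imin integrable_continuous_interval[OF continuous_on_const], of "\<delta> * D"] s0 by (simp add: mult.assoc)
      finally have "integral {0..s} (\<lambda>\<tau>. F \<tau> * v \<tau>) \<le> integral {0..s} (\<lambda>\<tau>. min (F \<tau> * lo) (F \<tau> * hi)) + s * (\<delta> * D) + h * (Mb * D)" .
      then have "?B - \<gamma> / 2 \<le> v s - integral {0..s} (\<lambda>\<tau>. F \<tau> * v \<tau>)"
        using vs sd hM by (simp add: algebra_simps)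
      then have "?B - \<gamma> / 2 \<le> y" using mem[OF adm] by simp
      then show False using \<gamma>p \<gamma>_def by linarith
    qed
  qed
qed


lemma inf_formula:
  fixes F :: "real \<Rightarrow> real" and lo hi s :: real
  assumes lohi: "lo \<le> hi" and s0: "0 \<le> s" and cF: "continuous_on {0..s} F"
  shows "Inf {v s - integral {0..s} (\<lambda>\<tau>. F \<tau> * v \<tau>) | v. admissible_v lo hi s v}
         = lo - integral {0..s} (\<lambda>\<tau>. max (F \<tau> * lo) (F \<tau> * hi))"
proof -
  let ?X = "\<lambda>lo hi. {v s - integral {0..s} (\<lambda>\<tau>. F \<tau> * v \<tau>) | v. admissible_v lo hi s v}"
  have neg: "- (v s - integral {0..s} (\<lambda>\<tau>. F \<tau> * v \<tau>)) = (\<lambda>\<tau>. - v \<tau>) s - integral {0..s} (\<lambda>\<tau>. F \<tau> * (\<lambda>\<tau>. - v \<tau>) \<tau>)" for v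
    by simp
  have adm_neg: "admissible_v (-b) (-a) s (\<lambda>\<tau>. - v \<tau>)" if "admissible_v a b s v" for a b v
    using that unfolding admissible_v_def by (auto intro: continuous_intros)
  have eq: "uminus ` ?X lo hi = ?X (-hi) (-lo)"
  proof
    show "uminus ` ?X lo hi \<subseteq> ?X (-hi) (-lo)"
    proof
      fix x assume "x \<in> uminus ` ?X lo hi"
      then obtain v where v: "admissible_v lo hi s v" "x = - (v s - integral {0..s} (\<lambda>\<tau>. F \<tau> * v \<tau>))" by blast
      have "x = (\<lambda>\<tau>. - v \<tau>) s - integral {0..s} (\<lambda>\<tau>. F \<tau> * (\<lambda>\<tau>. - v \<tau>) \<tau>)" using v(2) by simp
      then show "x \<in> ?X (-hi) (-lo)" using adm_neg[OF v(1)]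
        by (intro CollectI exI[of _ "\<lambda>\<tau>. - v \<tau>"] conjI) auto
    qed
    show "?X (-hi) (-lo) \<subseteq> uminus ` ?X lo hi"
    proof
      fix x assume "x \<in> ?X (-hi) (-lo)"
      then obtain v where v: "admissible_v (-hi) (-lo) s v" "x = v s - integral {0..s} (\<lambda>\<tau>. F \<tau> * v \<tau>)" by blast
      have a2: "admissible_v lo hi s (\<lambda>\<tau>. - v \<tau>)" using adm_neg[OF v(1)] by simp
      have "x = - ((\<lambda>\<tau>. - v \<tau>) s - integral {0..s} (\<lambda>\<tau>. F \<tau> * (\<lambda>\<tau>. - v \<tau>) \<tau>))" using v(2) by simp
      moreover have "(\<lambda>\<tau>. - v \<tau>) s - integral {0..s} (\<lambda>\<tau>. F \<tau> * (\<lambda>\<tau>. - v \<tau>) \<tau>) \<in> ?X lo hi"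
        using a2 by (intro CollectI exI[of _ "\<lambda>\<tau>. - v \<tau>"] conjI) auto
      ultimately show "x \<in> uminus ` ?X lo hi" by blast
    qed
  qed
  have "Inf (?X lo hi) = - Sup (?X (-hi) (-lo))" by (simp add: Inf_real_def eq)
  also have "Sup (?X (-hi) (-lo)) = - lo - integral {0..s} (\<lambda>\<tau>. min (F \<tau> * - hi) (F \<tau> * - lo))"
    by (rule sup_formula) (use lohi s0 cF in auto)
  also have "(\<lambda>\<tau>. min (F \<tau> * - hi) (F \<tau> * - lo)) = (\<lambda>\<tau>. - max (F \<tau> * lo) (F \<tau> * hi))"
    by (auto simp: min_def max_def fun_eq_iff)
  finally show ?thesis by simp
qed

lemma integral_flip:
  fixes h :: "real \<Rightarrow> real"
  assumes "h integrable_on {0..s}"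
  shows "integral {0..s} (\<lambda>\<tau>. h (s - \<tau>)) = integral {0..s} h"
proof -
  have "(h has_integral integral {0..s} h) {0..s}" using assms by (rule integrable_integral)
  then have "((\<lambda>x. h (-x)) has_integral integral {0..s} h) {-s..-0}"
    by (subst has_integral_reflect_real) 
  then have "(((\<lambda>x. h (-x)) \<circ> (+) (-s)) has_integral integral {0..s} h) {0..s}"
    using has_integral_shift_Icc_real[of "\<lambda>x. h (-x)" "-s" _ 0 s] by simp
  then have "((\<lambda>\<tau>. h (s - \<tau>)) has_integral integral {0..s} h) {0..s}" by (simp add: o_def)
  then show ?thesis by (rule integral_unique)
qed

lemma cont_yEx:
  fixes B :: "real mat" and x y :: "real vec"
  assumes B: "B \<in> carrier_mat n n" and dx: "dim_vec x = n"
  shows "continuous_on S (\<lambda>r. y \<bullet> (mat_exp n r B *\<^sub>v x))"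
proof -
  have eq: "y \<bullet> (mat_exp n r B *\<^sub>v x) = (\<Sum>i<n. y $ i * (\<Sum>j<dim_vec x. mat_exp n r B $$ (i, j) * x $ j))" for r
    using dx by (auto simp: scalar_prod_def mat_exp_def lessThan_atLeast0 row_def intro!: sum.cong)
  have c: "continuous_on S (\<lambda>r. mat_exp n r B $$ (i, j))" if "i < n" "j < n" for i j
    using matexp_cont[OF B that] .
  show ?thesis unfolding eq
  proof (intro continuous_intros)
    fix i j assume "i \<in> {..<n}" "j \<in> {..<dim_vec x}"
    then show "continuous_on S (\<lambda>r. mat_exp n r B $$ (i, j))" using c dx by auto
  qed
qed


lemma u_props:
  fixes A :: "real mat" and b z0 :: "real vec"
  assumes vv: "vmin \<le> vmax" and t: "0 \<le> t"
  shows "continuous_on {0..t} (umin n A b vmin vmax z0)"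
    and "continuous_on {0..t} (umax n A b vmin vmax z0)"
    and "\<And>s. s \<in> {0..t} \<Longrightarrow> umin n A b vmin vmax z0 s \<le> umax n A b vmin vmax z0 s"
proof -
  have Ac: "Acon n A \<in> carrier_mat n n" by (simp add: Acon_def)
  have db: "dim_vec (bcon n) = n" by (simp add: bcon_def)
  have dx: "dim_vec (Mmat n A b *\<^sub>v z0) = n" by (simp add: Mmat_def)
  define g where "g r = cvec n A \<bullet> (mat_exp n r (Acon n A) *\<^sub>v bcon n)" for r
  define gx where "gx r = cvec n A \<bullet> (mat_exp n r (Acon n A) *\<^sub>v (Mmat n A b *\<^sub>v z0))" for r
  have cg: "continuous_on UNIV g" unfolding g_def[abs_def] by (rule cont_yEx[OF Ac db])
  have cgx: "continuous_on UNIV gx" unfolding gx_def[abs_def] by (rule cont_yEx[OF Ac dx])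
  define hmin where "hmin r = min (g r * vmin) (g r * vmax)" for r
  define hmax where "hmax r = max (g r * vmin) (g r * vmax)" for r
  have chmin: "continuous_on UNIV hmin" unfolding hmin_def[abs_def] by (intro continuous_intros cg)
  have chmax: "continuous_on UNIV hmax" unfolding hmax_def[abs_def] by (intro continuous_intros cg)
  have fk: "fker n A s \<tau> = g (s - \<tau>)" for s \<tau> by (simp add: fker_def g_def)
  have cF: "continuous_on {0..s} (fker n A s)" for s
  proof -
    have "continuous_on {0..s} (\<lambda>\<tau>. g (s - \<tau>))"
      by (rule continuous_on_compose2[OF cg]) (auto intro: continuous_intros)
    then show ?thesis unfolding fk[abs_def] .
  qed
  have Imax_eq: "Imax n A vmin vmax s = vmax - integral {0..s} hmin" if s: "0 \<le> s" for s
  proof -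
    have "Imax n A vmin vmax s = vmax - integral {0..s} (\<lambda>\<tau>. min (fker n A s \<tau> * vmin) (fker n A s \<tau> * vmax))"
      unfolding Imax_def Ifun_def by (rule sup_formula[OF vv s cF])
    also have "integral {0..s} (\<lambda>\<tau>. min (fker n A s \<tau> * vmin) (fker n A s \<tau> * vmax)) = integral {0..s} (\<lambda>\<tau>. hmin (s - \<tau>))"
      by (simp add: fk hmin_def)
    also have "\<dots> = integral {0..s} hmin"
      by (rule integral_flip) (rule integrable_continuous_interval, rule continuous_on_subset[OF chmin], simp)
    finally show ?thesis .
  qed
  have Imin_eq: "Imin n A vmin vmax s = vmin - integral {0..s} hmax" if s: "0 \<le> s" for s
  proof -
    have "Imin n A vmin vmax s = vmin - integral {0..s} (\<lambda>\<tau>. max (fker n A s \<tau> * vmin) (fker n A s \<tau> * vmax))"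
      unfolding Imin_def Ifun_def by (rule inf_formula[OF vv s cF])
    also have "integral {0..s} (\<lambda>\<tau>. max (fker n A s \<tau> * vmin) (fker n A s \<tau> * vmax)) = integral {0..s} (\<lambda>\<tau>. hmax (s - \<tau>))"
      by (simp add: fk hmax_def)
    also have "\<dots> = integral {0..s} hmax"
      by (rule integral_flip) (rule integrable_continuous_interval, rule continuous_on_subset[OF chmax], simp)
    finally show ?thesis .
  qed
  have umax_eq: "umax n A b vmin vmax z0 s = - gx s + (vmax - integral {0..s} hmin)" if "s \<in> {0..t}" for s
    using Imax_eq[of s] that by (simp add: umax_def gx_def)
  have umin_eq: "umin n A b vmin vmax z0 s = - gx s + (vmin - integral {0..s} hmax)" if "s \<in> {0..t}" for s
    using Imin_eq[of s] that by (simp add: umin_def gx_def)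
  have ii1: "continuous_on {0..t} (\<lambda>s. integral {0..s} hmin)"
    by (rule indefinite_integral_continuous_1) (rule integrable_continuous_interval, rule continuous_on_subset[OF chmin], simp)
  have ii2: "continuous_on {0..t} (\<lambda>s. integral {0..s} hmax)"
    by (rule indefinite_integral_continuous_1) (rule integrable_continuous_interval, rule continuous_on_subset[OF chmax], simp)
  have cgx': "continuous_on {0..t} gx" using cgx continuous_on_subset by blast
  show "continuous_on {0..t} (umax n A b vmin vmax z0)"
    by (rule continuous_on_eq[OF _ umax_eq[symmetric]]) (intro continuous_intros cgx' ii1)
  show "continuous_on {0..t} (umin n A b vmin vmax z0)"
    by (rule continuous_on_eq[OF _ umin_eq[symmetric]]) (intro continuous_intros cgx' ii2)
  fix s assume s: "s \<in> {0..t}"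
  have "integral {0..s} hmin \<le> integral {0..s} hmax"
    by (rule integral_le) (auto intro!: integrable_continuous_interval continuous_on_subset[OF chmin] continuous_on_subset[OF chmax] simp: hmin_def hmax_def)
  then show "umin n A b vmin vmax z0 s \<le> umax n A b vmin vmax z0 s"
    using umin_eq[OF s] umax_eq[OF s] vv by simp
qed


lemma deriv_val:
  assumes "i < n" "dim_vec v = n"
  shows "(Aint n *\<^sub>v v + c \<cdot>\<^sub>v bcon n) $ i = (if i < n - 1 then v $ (Suc i) else c)"
proof -
  have "(Aint n *\<^sub>v v) $ i = (\<Sum>j\<in>{0..<n}. (if i < n - 1 \<and> j = Suc i then 1 else 0) * v $ j)"
    using assms by (simp add: Aint_def scalar_prod_def row_def)
  also have "\<dots> = (\<Sum>j\<in>{0..<n}. if j = Suc i then (if i < n - 1 then v $ j else 0) else 0)"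
    by (intro sum.cong) auto
  also have "\<dots> = (if i < n - 1 then v $ (Suc i) else 0)"
    using assms by (auto simp: sum.delta)
  finally have a: "(Aint n *\<^sub>v v) $ i = (if i < n - 1 then v $ (Suc i) else 0)" .
  have b: "(c \<cdot>\<^sub>v bcon n) $ i = (if i = n - 1 then c else 0)"
    using assms by (simp add: bcon_def)
  have "(Aint n *\<^sub>v v + c \<cdot>\<^sub>v bcon n) $ i = (Aint n *\<^sub>v v) $ i + (c \<cdot>\<^sub>v bcon n) $ i"
    using assms by (simp add: bcon_def Aint_def)
  then show ?thesis using a b assms by auto
qed

lemma reach_formula:
  fixes x :: "real \<Rightarrow> real vec" and u :: "real \<Rightarrow> real"
  assumes dimx: "\<And>s. dim_vec (x s) = n" and x0: "x 0 = x0" and t: "0 \<le> t" and k: "k < n"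
    and der: "\<And>s i. s \<in> {0..t} \<Longrightarrow> i < n \<Longrightarrow>
         ((\<lambda>r. x r $ i) has_real_derivative ((Aint n *\<^sub>v x s + u s \<cdot>\<^sub>v bcon n) $ i)) (at s within {0..t})"
  shows "x t $ k = chi n t x0 $ k + integral {0..t} (\<lambda>s. (t - s) ^ (n - 1 - k) / fact (n - 1 - k) * u s)"
proof -
  define Df where "Df m = (if m < n - k then (\<lambda>r. x r $ (k + m)) else u)" for m
  have "x t $ k = (\<Sum>i<n - k. ((t - 0) ^ i / fact i) *\<^sub>R Df i 0) +
      integral {0..t} (\<lambda>s. ((t - s) ^ (n - k - 1) / fact (n - k - 1)) *\<^sub>R Df (n - k) s)"
  proof (rule Taylor_integral[where f="\<lambda>r. x r $ k"])
    show "0 < n - k" using k by simp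
    show "Df 0 = (\<lambda>r. x r $ k)" using k by (simp add: Df_def)
    show "0 \<le> t" by fact
    fix m s assume m: "m < n - k" and s: "0 \<le> s" "s \<le> t"
    have "((\<lambda>r. x r $ (k + m)) has_real_derivative ((Aint n *\<^sub>v x s + u s \<cdot>\<^sub>v bcon n) $ (k + m))) (at s within {0..t})"
      using der[of s "k + m"] s m by simp
    also have "(Aint n *\<^sub>v x s + u s \<cdot>\<^sub>v bcon n) $ (k + m) = Df (Suc m) s"
      using deriv_val[of "k + m" n "x s" "u s"] m dimx[of s] by (auto simp: Df_def)
    finally show "(Df m has_vector_derivative Df (Suc m) s) (at s within {0..t})"
      using m by (simp add: Df_def has_real_derivative_iff_has_vector_derivative)
  qed
  also have "(\<Sum>i<n - k. ((t - 0) ^ i / fact i) *\<^sub>R Df i 0) = chi n t x0 $ k"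
  proof -
    have img: "(\<lambda>i. k + i) ` {..<n - k} = {k..n - 1}"
    proof -
      have "l \<in> (\<lambda>i. k + i) ` {..<n - k}" if "l \<in> {k..n - 1}" for l
        using k that by (intro image_eqI[of _ _ "l - k"]) auto
      moreover have "l \<in> {k..n - 1}" if "l \<in> (\<lambda>i. k + i) ` {..<n - k}" for l
        using k that by auto
      ultimately show ?thesis by blast
    qed
    have "(\<Sum>i<n - k. ((t - 0) ^ i / fact i) *\<^sub>R Df i 0) = (\<Sum>i<n - k. t ^ i / fact i * x0 $ (k + i))"
      by (intro sum.cong) (auto simp: Df_def x0)
    also have "\<dots> = (\<Sum>l\<in>(\<lambda>i. k + i) ` {..<n - k}. t ^ (l - k) / fact (l - k) * x0 $ l)"
      by (subst sum.reindex) (auto simp: inj_on_def)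
    finally show ?thesis using k img by (simp add: chi_def)
  qed
  also have "(\<lambda>s. ((t - s) ^ (n - k - 1) / fact (n - k - 1)) *\<^sub>R Df (n - k) s) = (\<lambda>s. (t - s) ^ (n - 1 - k) / fact (n - 1 - k) * u s)"
    by (auto simp: Df_def fun_eq_iff)
  finally show ?thesis .
qed


lemma sig_range:
  assumes "\<sigma> \<in> Wset n t" "i \<le> n" "0 \<le> t"
  shows "0 \<le> sig_ext n t \<sigma> i \<and> sig_ext n t \<sigma> i \<le> t"
proof -
  have mono: "sig_ext n t \<sigma> j \<le> sig_ext n t \<sigma> (Suc j)" if "j < n" for j
    using assms(1) that by (simp add: Wset_def)
  have lo: "sig_ext n t \<sigma> 0 \<le> sig_ext n t \<sigma> j" if "j \<le> n" for j
    using that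
  proof (induction j)
    case 0 then show ?case by simp
  next
    case (Suc j) then show ?case using mono[of j] by simp
  qed
  have hi: "sig_ext n t \<sigma> j \<le> sig_ext n t \<sigma> n" if "j \<le> n" for j
    using that
  proof (induction "n - j" arbitrary: j)
    case 0 then show ?case by simp
  next
    case (Suc d)
    then have "j < n" by simp
    have "d = n - Suc j" using Suc.hyps(2) by simp
    then have "sig_ext n t \<sigma> (Suc j) \<le> sig_ext n t \<sigma> n" using Suc.hyps(1)[of "Suc j"] \<open>j < n\<close> by simp
    then show ?case using mono[OF \<open>j < n\<close>] by simp
  qed
  have "sig_ext n t \<sigma> 0 = 0" by (simp add: sig_ext_def)
  moreover have "sig_ext n t \<sigma> n \<le> t" using assms(3) by (simp add: sig_ext_def)
  ultimately show ?thesis using lo[OF assms(2)] hi[OF assms(2)] by simp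
qed

theorem theorem3:
  fixes n :: nat and A :: "real mat" and b z0 :: "real vec" and vmin vmax t :: real
  assumes "n \<ge> 1"
    and "A \<in> carrier_mat n n" and "dim_vec b = n" and "dim_vec z0 = n"
    and "controllable n A b"
    and "distinct_eigenvalues n A"
    and "vmin \<le> vmax" and "t > 0"
  defines "x0 \<equiv> Mmat n A b *\<^sub>v z0"
    and "ul \<equiv> umin n A b vmin vmax z0"
    and "uh \<equiv> umax n A b vmin vmax z0"
  shows "\<forall>x \<in> reach_int n ul uh t x0. \<exists>\<sigma> \<in> Wset n t. \<exists>lam \<in> {0..1::real}.
           x = lam \<cdot>\<^sub>v x_upper n ul uh t x0 \<sigma> + (1 - lam) \<cdot>\<^sub>v x_lower n ul uh t x0 \<sigma>"
proof
  note n = assms(1) and vv = assms(7) and t = assms(8)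
  fix xt assume "xt \<in> reach_int n ul uh t x0"
  then obtain x u where xu: "xt = x t" "continuous_on {0..t} u" "\<And>s. s \<in> {0..t} \<Longrightarrow> ul s \<le> u s \<and> u s \<le> uh s"
    "\<And>s. dim_vec (x s) = n" "x 0 = x0"
    "\<And>s i. s \<in> {0..t} \<Longrightarrow> i < n \<Longrightarrow> ((\<lambda>r. x r $ i) has_real_derivative ((Aint n *\<^sub>v x s + u s \<cdot>\<^sub>v bcon n) $ i)) (at s within {0..t})"
    unfolding reach_int_def by blast
  have t': "0 \<le> t" using t by simp
  have cul: "continuous_on {0..t} ul" unfolding ul_def by (rule u_props(1)[OF vv t'])
  have cuh: "continuous_on {0..t} uh" unfolding uh_def by (rule u_props(2)[OF vv t'])
  define clamp where "clamp s = max 0 (min t s)" for s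
  have cclamp: "continuous_on UNIV clamp" unfolding clamp_def[abs_def] by (intro continuous_intros)
  have clr: "clamp s \<in> {0..t}" for s using t by (simp add: clamp_def)
  have clid: "clamp s = s" if "s \<in> {0..t}" for s using that by (simp add: clamp_def)
  define nu where "nu s = (uh s + ul s) / 2" for s
  define mu where "mu s = (uh (clamp s) - ul (clamp s)) / 2" for s
  define w where "w s = u (clamp s) - nu (clamp s)" for s
  have ccomp: "continuous_on UNIV (\<lambda>s. f (clamp s))" if "continuous_on {0..t} f" for f :: "real \<Rightarrow> real"
    by (rule continuous_on_compose2[OF that cclamp]) (use clr in auto)
  have cnu: "continuous_on {0..t} nu" unfolding nu_def[abs_def] by (intro continuous_intros cul cuh) simp
  have cmu: "continuous_on UNIV mu"
    unfolding mu_def[abs_def] by (intro continuous_intros ccomp cul cuh) simp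
  have cw: "continuous_on UNIV w"
    unfolding w_def[abs_def] by (intro continuous_intros ccomp xu(2) cnu)
  have wb: "\<bar>w s\<bar> \<le> mu s" if "s \<in> {0..t}" for s
    using xu(3)[OF that] clid[OF that] unfolding w_def mu_def nu_def by (auto simp: abs_if field_simps)
  obtain \<sigma> c where \<sigma>: "\<sigma> \<in> Wset n t" and c: "c \<in> {-1..1}"
    and pc: "\<And>k. k < n \<Longrightarrow> pvec n t w k =
           c * (\<Sum>i<n. (-1) ^ i * integral {sig_ext n t \<sigma> i..sig_ext n t \<sigma> (Suc i)} (\<lambda>s. mu s * Pk n t k s))"
    using core[OF t cmu cw wb n] by blast
  define lam where "lam = (1 + c) / 2"
  have lam: "lam \<in> {0..1}" using c by (simp add: lam_def)
  have xiP: "xi n (t - s) $ k = Pk n t k s" if "k < n" for k s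
    using that by (simp add: xi_def Pk_def)
  show "\<exists>\<sigma>\<in>Wset n t. \<exists>lam\<in>{0..1::real}. xt = lam \<cdot>\<^sub>v x_upper n ul uh t x0 \<sigma> + (1 - lam) \<cdot>\<^sub>v x_lower n ul uh t x0 \<sigma>"
  proof (intro bexI[OF _ \<sigma>] bexI[OF _ lam] eq_vecI)
    show "dim_vec xt = dim_vec (lam \<cdot>\<^sub>v x_upper n ul uh t x0 \<sigma> + (1 - lam) \<cdot>\<^sub>v x_lower n ul uh t x0 \<sigma>)"
      using xu(1,4) by (simp add: x_upper_def x_lower_def x_bound_def)
    fix k assume "k < dim_vec (lam \<cdot>\<^sub>v x_upper n ul uh t x0 \<sigma> + (1 - lam) \<cdot>\<^sub>v x_lower n ul uh t x0 \<sigma>)"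
    then have k: "k < n" by (simp add: x_upper_def x_lower_def x_bound_def)
    define Sg where "Sg = (\<Sum>i=1..n. (-1) ^ (i - 1) * integral {sig_ext n t \<sigma> (i - 1)..sig_ext n t \<sigma> i}
             (\<lambda>s. (uh s - ul s) / 2 * xi n (t - s) $ k))"
    define Inu where "Inu = integral {0..t} (\<lambda>s. (uh s + ul s) / 2 * xi n (t - s) $ k)"
    have dU: "dim_vec (x_upper n ul uh t x0 \<sigma>) = n" by (simp add: x_upper_def x_bound_def)
    have dL: "dim_vec (x_lower n ul uh t x0 \<sigma>) = n" by (simp add: x_lower_def x_bound_def)
    have up: "x_upper n ul uh t x0 \<sigma> $ k = chi n t x0 $ k + Inu + Sg"
      using k by (simp add: x_upper_def x_bound_def Sg_def Inu_def)
    have lo: "x_lower n ul uh t x0 \<sigma> $ k = chi n t x0 $ k + Inu - Sg"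
      using k by (simp add: x_lower_def x_bound_def Sg_def Inu_def)
    have "(lam \<cdot>\<^sub>v x_upper n ul uh t x0 \<sigma> + (1 - lam) \<cdot>\<^sub>v x_lower n ul uh t x0 \<sigma>) $ k
        = lam * x_upper n ul uh t x0 \<sigma> $ k + (1 - lam) * x_lower n ul uh t x0 \<sigma> $ k"
      using k dU dL by simp
    also have "\<dots> = lam * (chi n t x0 $ k + Inu + Sg) + (1 - lam) * (chi n t x0 $ k + Inu - Sg)"
      by (simp only: up lo)
    also have "\<dots> = chi n t x0 $ k + Inu + c * Sg" by (simp add: lam_def algebra_simps)
    finally have rhs: "(lam \<cdot>\<^sub>v x_upper n ul uh t x0 \<sigma> + (1 - lam) \<cdot>\<^sub>v x_lower n ul uh t x0 \<sigma>) $ k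
        = chi n t x0 $ k + Inu + c * Sg" .
    have Sg_eq: "Sg = (\<Sum>i<n. (-1) ^ i * integral {sig_ext n t \<sigma> i..sig_ext n t \<sigma> (Suc i)} (\<lambda>s. mu s * Pk n t k s))"
    proof -
      have "Sg = (\<Sum>i<n. (-1) ^ i * integral {sig_ext n t \<sigma> i..sig_ext n t \<sigma> (Suc i)}
             (\<lambda>s. (uh s - ul s) / 2 * xi n (t - s) $ k))"
        unfolding Sg_def using sum.atLeast1_atMost_eq[of "\<lambda>i. (-1) ^ (i - 1) * integral {sig_ext n t \<sigma> (i - 1)..sig_ext n t \<sigma> i}
             (\<lambda>s. (uh s - ul s) / 2 * xi n (t - s) $ k)" n] by simp
      also have "\<dots> = (\<Sum>i<n. (-1) ^ i * integral {sig_ext n t \<sigma> i..sig_ext n t \<sigma> (Suc i)} (\<lambda>s. mu s * Pk n t k s))"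
      proof -
        have "integral {sig_ext n t \<sigma> i..sig_ext n t \<sigma> (Suc i)} (\<lambda>s. (uh s - ul s) / 2 * xi n (t - s) $ k)
            = integral {sig_ext n t \<sigma> i..sig_ext n t \<sigma> (Suc i)} (\<lambda>s. mu s * Pk n t k s)" if i: "i < n" for i
        proof (rule integral_cong)
          fix s assume s: "s \<in> {sig_ext n t \<sigma> i..sig_ext n t \<sigma> (Suc i)}"
          have "s \<in> {0..t}" using s sig_range[OF \<sigma>, of i] sig_range[OF \<sigma>, of "Suc i"] i t by auto
          then show "(uh s - ul s) / 2 * xi n (t - s) $ k = mu s * Pk n t k s"
            using clid xiP[OF k] by (simp add: mu_def)
        qed
        then show ?thesis by (intro sum.cong refl) simp
      qed
      finally show ?thesis .
    qed
    have lhs: "xt $ k = chi n t x0 $ k + integral {0..t} (\<lambda>s. (t - s) ^ (n - 1 - k) / fact (n - 1 - k) * u s)"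
      using reach_formula[of x n x0 t k u] xu t k by auto
    have intu: "integral {0..t} (\<lambda>s. (t - s) ^ (n - 1 - k) / fact (n - 1 - k) * u s) = Inu + pvec n t w k"
    proof -
      have i1: "(\<lambda>s. nu s * Pk n t k s) integrable_on {0..t}"
        by (intro integrable_continuous_interval continuous_intros cnu cont_Pk)
      have i2: "(\<lambda>s. (u s - nu s) * Pk n t k s) integrable_on {0..t}"
        by (intro integrable_continuous_interval continuous_intros cnu cont_Pk xu(2))
      have "integral {0..t} (\<lambda>s. (t - s) ^ (n - 1 - k) / fact (n - 1 - k) * u s)
          = integral {0..t} (\<lambda>s. nu s * Pk n t k s + (u s - nu s) * Pk n t k s)"
        by (intro integral_cong) (simp add: Pk_def algebra_simps diff_divide_distrib)
      also have "\<dots> = integral {0..t} (\<lambda>s. nu s * Pk n t k s) + integral {0..t} (\<lambda>s. (u s - nu s) * Pk n t k s)"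
        by (rule integral_add[OF i1 i2])
      also have "integral {0..t} (\<lambda>s. nu s * Pk n t k s) = Inu"
        unfolding Inu_def using xiP[OF k] by (intro integral_cong) (simp add: nu_def)
      also have "integral {0..t} (\<lambda>s. (u s - nu s) * Pk n t k s) = pvec n t w k"
        unfolding pvec_def using clid by (intro integral_cong) (simp add: w_def)
      finally show ?thesis .
    qed
    show "xt $ k = (lam \<cdot>\<^sub>v x_upper n ul uh t x0 \<sigma> + (1 - lam) \<cdot>\<^sub>v x_lower n ul uh t x0 \<sigma>) $ k"
      using lhs intu rhs Sg_eq pc[OF k] by simp
  qed
qed


end
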